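(* Let $f_1,f_2,f_3,f_4$ be Morse functions on $S^{n-1}$, each with exactly $2$ critical points, such that all of their critical points are pairwise distinct. Then for all sufficiently small $\epsilon>0$, the difference of each pair of functions in $\{\epsilon^3f_1,\epsilon^2f_2,\epsilon f_3,f_4\}$ is a Morse function with exactly $2$ critical points.
   Context: $S^{n-1}$ carries the round metric (restriction of the Euclidean metric), $n\ge2$. *)

theory Defs
  imports "HOL-Analysis.Analysis"
begin

fun Ck_on :: "nat \<Rightarrow> 'a::real_normed_vector set \<Rightarrow> ('a \<Rightarrow> real) \<Rightarrow> bool" where
  "Ck_on 0 U f = continuous_on U f"
| "Ck_on (Suc k) U f =
     ((\<forall>x\<in>U. f differentiable (at x)) \<and>
      (\<forall>v. Ck_on k U (\<lambda>x. frechet_derivative f (at x) v)))"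

definition smooth_on :: "'a::real_normed_vector set \<Rightarrow> ('a \<Rightarrow> real) \<Rightarrow> bool" where
  "smooth_on U f \<longleftrightarrow> open U \<and> (\<forall>k. Ck_on k U f)"

text \<open>The unit sphere S^(n-1) in R^n, n = CARD('n), with the round metric.
  A smooth function on the sphere is (the restriction of) a function that is smooth
  on an open neighbourhood of the sphere.\<close>
abbreviation Sph :: "(real^'n) set" where
  "Sph \<equiv> sphere 0 1"

definition smooth_on_sphere :: "(real^'n \<Rightarrow> real) \<Rightarrow> bool" where
  "smooth_on_sphere f \<longleftrightarrow> (\<exists>U. Sph \<subseteq> U \<and> smooth_on U f)"

definition sphere_crit :: "(real^'n \<Rightarrow> real) \<Rightarrow> real^'n \<Rightarrow> bool" where
  "sphere_crit f x \<longleftrightarrow> x \<in> Sph \<and>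
     (\<forall>v. v \<bullet> x = 0 \<longrightarrow> frechet_derivative f (at x) v = 0)"

definition D2 :: "(real^'n \<Rightarrow> real) \<Rightarrow> real^'n \<Rightarrow> real^'n \<Rightarrow> real^'n \<Rightarrow> real" where
  "D2 f x v w = frechet_derivative (\<lambda>y. frechet_derivative f (at y) v) (at x) w"

text \<open>Hessian of f restricted to the round sphere at a critical point x, on T_x S:
  Hess(v,w) = D^2 f(x)(v,w) - (Df(x) x) (v . w)  (second fundamental form correction).\<close>
definition sphere_hessian :: "(real^'n \<Rightarrow> real) \<Rightarrow> real^'n \<Rightarrow> real^'n \<Rightarrow> real^'n \<Rightarrow> real" where
  "sphere_hessian f x v w = D2 f x v w - frechet_derivative f (at x) x * (v \<bullet> w)"

definition sphere_nondegenerate :: "(real^'n \<Rightarrow> real) \<Rightarrow> real^'n \<Rightarrow> bool" where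
  "sphere_nondegenerate f x \<longleftrightarrow>
     (\<forall>v. v \<bullet> x = 0 \<and> (\<forall>w. w \<bullet> x = 0 \<longrightarrow> sphere_hessian f x v w = 0) \<longrightarrow> v = 0)"

definition morse_on_sphere :: "(real^'n \<Rightarrow> real) \<Rightarrow> bool" where
  "morse_on_sphere f \<longleftrightarrow> smooth_on_sphere f \<and>
     (\<forall>x. sphere_crit f x \<longrightarrow> sphere_nondegenerate f x)"

definition crit_set :: "(real^'n \<Rightarrow> real) \<Rightarrow> (real^'n) set" where
  "crit_set f = {x. sphere_crit f x}"

end

theory Submission
  imports Defs
begin


lemma fd_local:
  assumes "open U" "x \<in> U" "\<And>y. y \<in> U \<Longrightarrow> f y = g y" "(f has_derivative f') (at x)"
  shows "frechet_derivative g (at x) = f'" "g differentiable (at x)"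
proof -
  have "(g has_derivative f') (at x)"
    using has_derivative_transform_within_open[OF assms(4) assms(1) assms(2)] assms(3) by blast
  then show "frechet_derivative g (at x) = f'" "g differentiable (at x)"
    using frechet_derivative_at differentiableI by metis+
qed

lemma Ck_cong:
  assumes "open U" "Ck_on k U f" "\<And>y. y \<in> U \<Longrightarrow> f y = g y"
  shows "Ck_on k U g"
  using assms(2,3)
proof (induction k arbitrary: f g)
  case 0
  then show ?case using continuous_on_cong by (metis Ck_on.simps(1))
next
  case (Suc k)
  have d: "\<forall>x\<in>U. f differentiable (at x)" using Suc.prems by simp
  have fe: "frechet_derivative g (at x) = frechet_derivative f (at x)" "g differentiable (at x)"
    if "x \<in> U" for x
    using fd_local[OF assms(1) that, of f g "frechet_derivative f (at x)"] Suc.prems(2) d that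
      frechet_derivative_works by auto
  show ?case
  proof (simp, intro conjI allI ballI)
    fix x assume "x \<in> U" then show "g differentiable (at x)" using fe by blast
  next
    fix v
    have "Ck_on k U (\<lambda>x. frechet_derivative f (at x) v)" using Suc.prems by simp
    then show "Ck_on k U (\<lambda>x. frechet_derivative g (at x) v)"
      by (rule Suc.IH) (simp add: fe)
  qed
qed

lemma Ck_lin:
  assumes "open U" "Ck_on k U f" "Ck_on k U g"
  shows "Ck_on k U (\<lambda>x. a * f x + b * g x)"
  using assms(2,3)
proof (induction k arbitrary: f g)
  case 0
  then show ?case by (auto intro!: continuous_intros)
next
  case (Suc k)
  have df: "\<forall>x\<in>U. f differentiable (at x)" and dg: "\<forall>x\<in>U. g differentiable (at x)"
    using Suc.prems by auto
  have hd: "((\<lambda>x. a * f x + b * g x) has_derivative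
       (\<lambda>v. a * frechet_derivative f (at x) v + b * frechet_derivative g (at x) v)) (at x)"
    if "x \<in> U" for x
    using df dg that
    by (auto intro!: derivative_eq_intros simp: frechet_derivative_works[symmetric])
  have fe: "frechet_derivative (\<lambda>x. a * f x + b * g x) (at x) =
       (\<lambda>v. a * frechet_derivative f (at x) v + b * frechet_derivative g (at x) v)"
    if "x \<in> U" for x
    using hd[OF that] frechet_derivative_at by metis
  show ?case
  proof (simp, intro conjI allI ballI)
    fix x assume "x \<in> U" then show "(\<lambda>x. a * f x + b * g x) differentiable (at x)"
      using hd differentiableI by blast
  next
    fix v
    have "Ck_on k U (\<lambda>x. a * frechet_derivative f (at x) v + b * frechet_derivative g (at x) v)"
      using Suc.prems by (intro Suc.IH) auto
    then show "Ck_on k U (\<lambda>x. frechet_derivative (\<lambda>x. a * f x + b * g x) (at x) v)"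
      by (rule Ck_cong[OF assms(1)]) (simp add: fe)
  qed
qed



definition gradf :: "(real^'n \<Rightarrow> real) \<Rightarrow> real^'n \<Rightarrow> real^'n" where
  "gradf f z = (\<chi> j. frechet_derivative f (at z) (axis j 1))"
definition hessm :: "(real^'n \<Rightarrow> real) \<Rightarrow> real^'n \<Rightarrow> real^'n^'n" where
  "hessm f z = (\<chi> j i. D2 f z (axis j 1) (axis i 1))"

lemma vec_as_sum: "(\<chi> j. h j) = (\<Sum>j\<in>UNIV. h j *\<^sub>R axis j (1::real))"
  by (simp add: vec_eq_iff axis_def if_distrib cong: if_cong)

lemma lin_expand:
  fixes L :: "real^'n \<Rightarrow> real"
  assumes "linear L"
  shows "L v = (\<chi> j. L (axis j 1)) \<bullet> v"
proof -
  have "L v = L (\<Sum>j\<in>UNIV. v$j *\<^sub>R axis j 1)"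
    using basis_expansion[of v] by (simp add: scalar_mult_eq_scaleR)
  also have "\<dots> = (\<Sum>j\<in>UNIV. v$j * L (axis j 1))"
    using assms by (simp add: linear_sum linear_scale)
  also have "\<dots> = (\<chi> j. L (axis j 1)) \<bullet> v"
    by (simp add: inner_vec_def mult.commute)
  finally show ?thesis .
qed

lemma C2_unfold:
  assumes "Ck_on 2 U f"
  shows "\<forall>x\<in>U. f differentiable (at x)"
    and "\<And>v. \<forall>x\<in>U. (\<lambda>y. frechet_derivative f (at y) v) differentiable (at x)"
    and "\<And>v w. continuous_on U (\<lambda>x. D2 f x v w)"
  using assms by (simp_all add: numeral_2_eq_2 D2_def)

lemma fd_grad:
  assumes "f differentiable (at z)"
  shows "frechet_derivative f (at z) v = gradf f z \<bullet> v"
  unfolding gradf_def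
  by (rule lin_expand) (use assms frechet_derivative_works has_derivative_linear in blast)

lemma grad_deriv:
  fixes f :: "real^'n \<Rightarrow> real"
  assumes "Ck_on 2 U f" "z \<in> U"
  shows "(gradf f has_derivative (\<lambda>w. hessm f z *v w)) (at z)"
proof -
  define g where "g j y = frechet_derivative f (at y) (axis j 1)" for j y
  have gd: "(g j has_derivative (\<lambda>w. D2 f z (axis j 1) w)) (at z)" for j
    using C2_unfold(2)[OF assms(1), of "axis j 1"] assms(2) frechet_derivative_works
    unfolding g_def D2_def by blast
  have eq: "gradf f = (\<lambda>y. \<Sum>j\<in>UNIV. g j y *\<^sub>R axis j (1::real))"
    by (rule ext) (simp add: gradf_def g_def vec_as_sum)
  have "((\<lambda>y. \<Sum>j\<in>UNIV. g j y *\<^sub>R axis j (1::real)) has_derivative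
        (\<lambda>w. \<Sum>j\<in>UNIV. D2 f z (axis j 1) w *\<^sub>R axis j (1::real))) (at z)"
    by (intro has_derivative_sum has_derivative_scaleR_left gd)
  moreover have "(\<lambda>w. \<Sum>j\<in>UNIV. D2 f z (axis j 1) w *\<^sub>R axis j (1::real)) = (\<lambda>w. hessm f z *v w)"
  proof
    fix w :: "real^'n"
    have lin: "linear (\<lambda>w. D2 f z (axis j 1) w)" for j
      using gd has_derivative_linear by blast
    have "(\<Sum>j\<in>UNIV. D2 f z (axis j 1) w *\<^sub>R axis j (1::real)) = (\<chi> j. D2 f z (axis j 1) w)"
      by (simp add: vec_as_sum)
    also have "\<dots> = hessm f z *v w"
      unfolding hessm_def matrix_vector_mult_def
      by (subst lin_expand[OF lin]) (simp add: inner_vec_def)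
    finally show "(\<Sum>j\<in>UNIV. D2 f z (axis j 1) w *\<^sub>R axis j (1::real)) = hessm f z *v w" .
  qed
  ultimately show ?thesis using eq by simp
qed

lemma grad_cont:
  assumes "Ck_on 2 U f"
  shows "continuous_on U (gradf f)"
proof -
  have "continuous_on U (\<lambda>y. frechet_derivative f (at y) (axis j 1))" for j
    using C2_unfold(2)[OF assms, of "axis j 1"]
    by (meson continuous_at_imp_continuous_on differentiable_imp_continuous_within)
  then show ?thesis unfolding gradf_def by (intro continuous_on_vec_lambda) auto
qed

lemma hess_cont:
  assumes "Ck_on 2 U f"
  shows "continuous_on U (hessm f)"
  unfolding hessm_def
  by (intro continuous_on_vec_lambda C2_unfold(3)[OF assms])

lemma comb_deriv:
  assumes "open U" "Ck_on 2 U F" "Ck_on 2 U G" "z \<in> U"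
    and h: "\<And>y. y \<in> U \<Longrightarrow> h y = a * F y + b * G y"
  shows "frechet_derivative h (at z) = (\<lambda>v. (a *\<^sub>R gradf F z + b *\<^sub>R gradf G z) \<bullet> v)"
    and "h differentiable (at z)"
    and "D2 h z v w = ((a *\<^sub>R hessm F z + b *\<^sub>R hessm G z) *v w) \<bullet> v"
proof -
  have hd: "((\<lambda>x. a * F x + b * G x) has_derivative
       (\<lambda>v. (a *\<^sub>R gradf F y + b *\<^sub>R gradf G y) \<bullet> v)) (at y)" if "y \<in> U" for y
  proof -
    have "((\<lambda>x. a * F x + b * G x) has_derivative
       (\<lambda>v. a * frechet_derivative F (at y) v + b * frechet_derivative G (at y) v)) (at y)"
      using C2_unfold(1)[OF assms(2)] C2_unfold(1)[OF assms(3)] that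
      by (auto intro!: derivative_eq_intros simp: frechet_derivative_works[symmetric])
    moreover have "(\<lambda>v. a * frechet_derivative F (at y) v + b * frechet_derivative G (at y) v)
        = (\<lambda>v. (a *\<^sub>R gradf F y + b *\<^sub>R gradf G y) \<bullet> v)"
      using C2_unfold(1)[OF assms(2)] C2_unfold(1)[OF assms(3)] that
      by (simp add: fd_grad inner_add_left)
    ultimately show ?thesis by simp
  qed
  have fe: "frechet_derivative h (at y) = (\<lambda>v. (a *\<^sub>R gradf F y + b *\<^sub>R gradf G y) \<bullet> v)"
     if "y \<in> U" for y
    using fd_local(1)[OF assms(1) that _ hd[OF that], of h] h by metis
  show "frechet_derivative h (at z) = (\<lambda>v. (a *\<^sub>R gradf F z + b *\<^sub>R gradf G z) \<bullet> v)"
    using fe assms(4) .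
  show "h differentiable (at z)"
    using fd_local(2)[OF assms(1) assms(4) _ hd[OF assms(4)], of h] h by metis
  have "((\<lambda>y. (a *\<^sub>R gradf F y + b *\<^sub>R gradf G y) \<bullet> v) has_derivative
        (\<lambda>w. ((a *\<^sub>R hessm F z + b *\<^sub>R hessm G z) *v w) \<bullet> v)) (at z)"
    using grad_deriv[OF assms(2,4)] grad_deriv[OF assms(3,4)]
    by (auto intro!: derivative_eq_intros simp: matrix_vector_mult_add_rdistrib
          scaleR_matrix_vector_assoc[symmetric] inner_add_left)
  then show "D2 h z v w = ((a *\<^sub>R hessm F z + b *\<^sub>R hessm G z) *v w) \<bullet> v"
    unfolding D2_def
    using fd_local(1)[OF assms(1) assms(4), of "\<lambda>y. (a *\<^sub>R gradf F y + b *\<^sub>R gradf G y) \<bullet> v"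
        "\<lambda>y. frechet_derivative h (at y) v"] fe by auto
qed



definition proj :: "real^'n \<Rightarrow> real^'n \<Rightarrow> real^'n" where
  "proj c y = y - (c \<bullet> y) *\<^sub>R c"

definition outer :: "real^'n \<Rightarrow> real^'n^'n" where
  "outer c = (\<chi> i j. c$i * c$j)"

definition Cn :: "'n::finite itself \<Rightarrow> real" where
  "Cn _ = real CARD('n) * real CARD('n)"

lemma Cn_ge1: "Cn TYPE('n::finite) \<ge> 1"
proof -
  have "real CARD('n) \<ge> 1" by (simp add: Suc_leI)
  then show ?thesis unfolding Cn_def by (metis mult_mono' mult_1 zero_le_one)
qed

lemma mvb:
  fixes Q :: "real^'n^'n"
  shows "norm (Q *v w) \<le> Cn TYPE('n) * norm Q * norm w"
proof -
  have "norm (Q *v w) \<le> onorm ((*v) Q) * norm w"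
    by (rule onorm[OF matrix_vector_mul_bounded_linear])
  also have "onorm ((*v) Q) \<le> Cn TYPE('n) * norm Q"
    unfolding Cn_def
    by (rule onorm_le_matrix_component) (rule order_trans[OF component_le_norm_cart Finite_Cartesian_Product.norm_nth_le])
  finally show ?thesis by (simp add: mult_right_mono)
qed

lemma mvbT:
  fixes Q :: "real^'n^'n"
  shows "norm (transpose Q *v w) \<le> Cn TYPE('n) * norm Q * norm w"
proof -
  have "norm (transpose Q *v w) \<le> onorm ((*v) (transpose Q)) * norm w"
    by (rule onorm[OF matrix_vector_mul_bounded_linear])
  also have "onorm ((*v) (transpose Q)) \<le> Cn TYPE('n) * norm Q"
    unfolding Cn_def
  proof (rule onorm_le_matrix_component)
    fix i j
    have "\<bar>transpose Q $ i $ j\<bar> = \<bar>Q $ j $ i\<bar>" by (simp add: transpose_def)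
    also have "\<dots> \<le> norm (Q $ j)" by (rule component_le_norm_cart)
    also have "\<dots> \<le> norm Q" by (rule Finite_Cartesian_Product.norm_nth_le)
    finally show "\<bar>transpose Q $ i $ j\<bar> \<le> norm Q" .
  qed
  finally show ?thesis by (simp add: mult_right_mono)
qed

lemma outer_mv: "outer c *v y = (c \<bullet> y) *\<^sub>R c"
  by (simp add: outer_def matrix_vector_mult_def vec_eq_iff inner_vec_def sum_distrib_left
      sum_distrib_right mult_ac)

lemma Pm_mv: "(mat 1 - outer c) *v y = proj c y"
  by (simp add: matrix_vector_mult_diff_rdistrib outer_mv proj_def)

lemma transpose_outer: "transpose (outer c) = outer c"
  by (simp add: transpose_def outer_def vec_eq_iff mult.commute)

lemma transpose_plus: "transpose (A + B) = transpose A + transpose (B::real^'n^'n)"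
  by (simp add: transpose_def vec_eq_iff)

lemma transpose_minus: "transpose (A - B) = transpose A - transpose (B::real^'n^'n)"
  by (simp add: transpose_def vec_eq_iff)

lemma proj_orth: "norm c = 1 \<Longrightarrow> c \<bullet> proj c y = 0"
  by (simp add: proj_def inner_diff_right dot_square_norm)

lemma proj_sym: "u \<bullet> proj c y = proj c u \<bullet> y"
  by (simp add: proj_def inner_diff_right inner_diff_left inner_commute)

lemma proj_idem: "norm c = 1 \<Longrightarrow> proj c (proj c y) = proj c y"
  by (metis proj_def proj_orth diff_zero scale_zero_left)

lemma proj_self_inner: "norm c = 1 \<Longrightarrow> proj c y \<bullet> y = norm (proj c y) ^ 2"
  by (metis proj_idem proj_sym power2_norm_eq_inner)

lemma proj_norm_le: "norm c = 1 \<Longrightarrow> norm (proj c y) \<le> norm y"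
proof -
  assume c: "norm c = 1"
  have "norm (proj c y) ^ 2 = proj c y \<bullet> y" using proj_self_inner[OF c] by simp
  also have "\<dots> \<le> norm (proj c y) * norm y" by (rule norm_cauchy_schwarz)
  finally have "norm (proj c y) ^ 2 \<le> norm (proj c y) * norm y" .
  then show ?thesis
    by (metis mult_le_cancel_left norm_ge_zero power2_eq_square order.trans order_refl
        not_less mult_zero_left norm_le_zero_iff)
qed

lemma lin_alg:
  fixes S :: "real^'n^'n" and c :: "real^'n"
  assumes c: "norm c = 1"
    and nd: "\<And>v. v \<bullet> c = 0 \<Longrightarrow> (\<And>w. w \<bullet> c = 0 \<Longrightarrow> (S *v w) \<bullet> v = 0) \<Longrightarrow> v = 0"
  shows "\<exists>K>0. (\<forall>v. norm v \<le> K * norm (proj c (transpose S *v proj c v) + (c \<bullet> v) *\<^sub>R c)) \<and>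
               (\<forall>d. norm d \<le> K * norm (proj c (S *v proj c d) + (c \<bullet> d) *\<^sub>R c))"
proof -
  define P where "P = mat 1 - outer c"
  define M1 where "M1 = P ** transpose S ** P + outer c"
  define M2 where "M2 = P ** S ** P + outer c"
  have tP: "transpose P = P" unfolding P_def by (simp add: transpose_minus transpose_outer)
  have tM: "transpose M1 = M2"
    unfolding M1_def M2_def
    by (simp add: transpose_plus transpose_outer matrix_transpose_mul tP matrix_mul_assoc)
  have M1v: "M1 *v v = proj c (transpose S *v proj c v) + (c \<bullet> v) *\<^sub>R c" for v
    unfolding M1_def P_def
    by (simp add: matrix_vector_mult_add_rdistrib outer_mv Pm_mv flip: matrix_vector_mul_assoc)
  have M2v: "M2 *v v = proj c (S *v proj c v) + (c \<bullet> v) *\<^sub>R c" for v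
    unfolding M2_def P_def
    by (simp add: matrix_vector_mult_add_rdistrib outer_mv Pm_mv flip: matrix_vector_mul_assoc)
  have ker: "v = 0" if "M1 *v v = 0" for v
  proof -
    have e: "proj c (transpose S *v proj c v) + (c \<bullet> v) *\<^sub>R c = 0" using that M1v by simp
    have "c \<bullet> (proj c (transpose S *v proj c v) + (c \<bullet> v) *\<^sub>R c) = c \<bullet> v"
      using c by (simp add: inner_add_right proj_orth dot_square_norm)
    then have cv: "c \<bullet> v = 0" using e by simp
    then have pv: "proj c v = v" by (simp add: proj_def)
    have pz: "proj c (transpose S *v v) = 0" using e cv pv by simp
    show "v = 0"
    proof (rule nd)
      show "v \<bullet> c = 0" using cv by (simp add: inner_commute)
    next
      fix w assume w: "w \<bullet> c = 0"
      have "(S *v w) \<bullet> v = w \<bullet> (transpose S *v v)"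
        using dot_lmul_matrix[of v S w] by (simp add: inner_commute)
      also have "\<dots> = w \<bullet> proj c (transpose S *v v) + (c \<bullet> (transpose S *v v)) * (w \<bullet> c)"
        by (simp add: proj_def inner_diff_right)
      also have "\<dots> = 0" using pz w by simp
      finally show "(S *v w) \<bullet> v = 0" .
    qed
  qed
  have "inj ((*v) M1)"
  proof (rule injI)
    fix x y assume "M1 *v x = M1 *v y"
    then have "M1 *v (x - y) = 0" by (simp add: matrix_vector_mult_diff_distrib)
    then show "x = y" using ker[of "x - y"] by simp
  qed
  then obtain N where N: "N ** M1 = mat 1" using matrix_left_invertible_injective by blast
  then have "M1 ** N = mat 1" using matrix_left_right_inverse by blast
  then have N2: "transpose N ** M2 = mat 1"
    using tM by (metis matrix_transpose_mul transpose_mat)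
  define K where "K = Cn TYPE('n) * (norm N + norm (transpose N)) + 1"
  have Kpos: "K > 0" unfolding K_def using Cn_ge1[where 'n='n]
    by (intro add_nonneg_pos mult_nonneg_nonneg) auto
  have b1: "norm v \<le> K * norm (M1 *v v)" for v
  proof -
    have "norm v = norm (N *v (M1 *v v))" by (simp add: matrix_vector_mul_assoc N)
    also have "\<dots> \<le> Cn TYPE('n) * norm N * norm (M1 *v v)" by (rule mvb)
    also have "\<dots> \<le> K * norm (M1 *v v)"
      unfolding K_def using Cn_ge1[where 'n='n]
      by (intro mult_right_mono) (auto simp: algebra_simps)
    finally show ?thesis .
  qed
  have b2: "norm v \<le> K * norm (M2 *v v)" for v
  proof -
    have "norm v = norm (transpose N *v (M2 *v v))" by (simp add: matrix_vector_mul_assoc N2)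
    also have "\<dots> \<le> Cn TYPE('n) * norm (transpose N) * norm (M2 *v v)" by (rule mvb)
    also have "\<dots> \<le> K * norm (M2 *v v)"
      unfolding K_def using Cn_ge1[where 'n='n]
      by (intro mult_right_mono) (auto simp: algebra_simps)
    finally show ?thesis .
  qed
  show ?thesis using Kpos b1 b2 M1v M2v by metis
qed



definition acrit :: "(real^'n \<Rightarrow> real^'n) \<Rightarrow> real^'n \<Rightarrow> bool" where
  "acrit g x \<longleftrightarrow> norm x = 1 \<and> (\<forall>v. v \<bullet> x = 0 \<longrightarrow> g x \<bullet> v = 0)"

definition andeg :: "(real^'n \<Rightarrow> real^'n) \<Rightarrow> (real^'n \<Rightarrow> real^'n^'n) \<Rightarrow> real^'n \<Rightarrow> bool" where
  "andeg g A x \<longleftrightarrow> (\<forall>v. v \<bullet> x = 0 \<and> (\<forall>w. w \<bullet> x = 0 \<longrightarrow> (A x *v w) \<bullet> v - (g x \<bullet> x) * (v \<bullet> w) = 0) \<longrightarrow> v = 0)"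

lemma acrit_phi:
  assumes "acrit g x"
  shows "g x \<bullet> u - (u \<bullet> x) * (g x \<bullet> x) = 0"
proof -
  have n: "x \<bullet> x = 1" using assms unfolding acrit_def by (simp add: dot_square_norm)
  have "(u - (u \<bullet> x) *\<^sub>R x) \<bullet> x = 0" by (simp add: inner_diff_left n)
  then have "g x \<bullet> (u - (u \<bullet> x) *\<^sub>R x) = 0" using assms unfolding acrit_def by blast
  then show ?thesis by (simp add: inner_diff_right algebra_simps)
qed

lemma cd_small:
  assumes "norm x = 1" "norm y = 1" "x \<in> ball c r" "y \<in> ball c r"
  shows "\<bar>c \<bullet> (y - x)\<bar> \<le> r * norm (y - x)"
proof -
  have "(y - x) \<bullet> (y + x) = 0"
  proof -
    have "x \<bullet> x = 1" "y \<bullet> y = 1" using assms(1,2) norm_eq_1 by auto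
    moreover have "(y - x) \<bullet> (y + x) = y \<bullet> y - x \<bullet> x"
      by (simp add: inner_diff_left inner_add_right inner_commute[of x y])
    ultimately show ?thesis by simp
  qed
  moreover have "(c - (1/2) *\<^sub>R (x + y)) \<bullet> (y - x) = c \<bullet> (y - x) - (1/2) * ((x + y) \<bullet> (y - x))"
    by (simp add: inner_diff_left)
  moreover have "(x + y) \<bullet> (y - x) = (y - x) \<bullet> (y + x)"
    by (simp add: inner_commute add.commute)
  ultimately have "c \<bullet> (y - x) = (c - (1/2) *\<^sub>R (x + y)) \<bullet> (y - x)"
    by simp
  also have "\<bar>\<dots>\<bar> \<le> norm (c - (1/2) *\<^sub>R (x + y)) * norm (y - x)"
    by (rule Cauchy_Schwarz_ineq2)
  also have "norm (c - (1/2) *\<^sub>R (x + y)) \<le> r"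
  proof -
    have "c - (1/2) *\<^sub>R (x + y) = (1/2) *\<^sub>R (c - x) + (1/2) *\<^sub>R (c - y)"
      by (simp add: algebra_simps flip: scaleR_add_left)
    also have "norm \<dots> \<le> (1/2) * norm (c - x) + (1/2) * norm (c - y)"
      by (rule order_trans[OF norm_triangle_ineq]) simp
    also have "\<dots> \<le> r" using assms(3,4) by (simp add: dist_norm)
    finally show ?thesis .
  qed
  then have "norm (c - (1/2) *\<^sub>R (x + y)) * norm (y - x) \<le> r * norm (y - x)"
    by (simp add: mult_right_mono)
  finally show ?thesis .
qed



lemma uniq_est:
  fixes g :: "real^'n \<Rightarrow> real^'n" and A :: "real^'n \<Rightarrow> real^'n^'n"
  assumes c: "norm c = 1" and rpos: "r > 0"
    and dg: "\<And>z. z \<in> ball c r \<Longrightarrow> (g has_derivative (\<lambda>w. A z *v w)) (at z)"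
    and Kpos: "K > 0"
    and Kb: "\<And>d. norm d \<le> K * norm (proj c (S *v proj c d) + (c \<bullet> d) *\<^sub>R c)"
    and Sdef: "S = A0 - lam *\<^sub>R mat 1"
    and bnd: "\<And>z. z \<in> ball c r \<Longrightarrow>
       Cn TYPE('n) * norm (A z - A0) + \<bar>g z \<bullet> z - lam\<bar> +
       r * (Cn TYPE('n) * norm (A z) * norm z + norm (g z)) \<le> eta"
    and small: "K * (eta + r * (Cn TYPE('n) * norm S + 1)) < 1"
    and x: "x \<in> ball c r" and y: "y \<in> ball c r"
    and cx: "acrit g x" and cy: "acrit g y"
  shows "x = y"
proof (rule ccontr)
  assume neq: "x \<noteq> y"
  define d where "d = y - x"
  define u where "u = proj c (S *v d)"
  define s where "s = u v* S"
  have sw: "s \<bullet> w = u \<bullet> (S *v w)" for w unfolding s_def by (rule dot_lmul_matrix)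
  have uc: "u \<bullet> c = 0" unfolding u_def using proj_orth[OF c] by (simp add: inner_commute)
  have uc': "c \<bullet> u = 0" using uc by (simp add: inner_commute)
  define phi where "phi z = g z \<bullet> u - (u \<bullet> z) * (g z \<bullet> z) - s \<bullet> z" for z
  define phi' where "phi' z w = (A z *v w) \<bullet> u - ((u \<bullet> w) * (g z \<bullet> z) + (u \<bullet> z) * ((A z *v w) \<bullet> z + g z \<bullet> w)) - s \<bullet> w" for z w
  have dphi: "(phi has_derivative phi' z) (at z within ball c r)" if z: "z \<in> ball c r" for z
  proof -
    have "(phi has_derivative phi' z) (at z)"
      unfolding phi_def phi'_def
      by (rule derivative_eq_intros dg[OF z] refl | simp add: inner_commute algebra_simps)+
    then show ?thesis by (rule has_derivative_at_withinI)
  qed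
  have obnd: "onorm (phi' z) \<le> norm u * eta" if z: "z \<in> ball c r" for z
  proof (rule onorm_le)
    fix w
    have e: "phi' z w = u \<bullet> ((A z - A0) *v w) - (u \<bullet> w) * (g z \<bullet> z - lam)
        - (u \<bullet> (z - c)) * ((A z *v w) \<bullet> z + g z \<bullet> w)"
      unfolding phi'_def sw Sdef
      by (simp add: matrix_vector_mult_diff_rdistrib inner_diff_right inner_diff_left
          inner_commute uc uc' algebra_simps scaleR_matrix_vector_assoc[symmetric])
    have t1: "\<bar>u \<bullet> ((A z - A0) *v w)\<bar> \<le> norm u * (Cn TYPE('n) * norm (A z - A0) * norm w)"
      by (rule order_trans[OF Cauchy_Schwarz_ineq2]) (simp add: mult_left_mono mvb)
    have t2: "\<bar>(u \<bullet> w) * (g z \<bullet> z - lam)\<bar> \<le> norm u * norm w * \<bar>g z \<bullet> z - lam\<bar>"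
      by (simp add: abs_mult mult_right_mono Cauchy_Schwarz_ineq2)
    have zc: "norm (z - c) \<le> r" using z by (simp add: dist_norm norm_minus_commute)
    have t3a: "\<bar>u \<bullet> (z - c)\<bar> \<le> norm u * r"
      by (rule order_trans[OF Cauchy_Schwarz_ineq2]) (simp add: mult_left_mono zc)
    have t3b: "\<bar>(A z *v w) \<bullet> z + g z \<bullet> w\<bar> \<le> Cn TYPE('n) * norm (A z) * norm z * norm w + norm (g z) * norm w"
    proof -
      have "\<bar>(A z *v w) \<bullet> z\<bar> \<le> norm (A z *v w) * norm z" by (rule Cauchy_Schwarz_ineq2)
      also have "\<dots> \<le> (Cn TYPE('n) * norm (A z) * norm w) * norm z"
        by (simp add: mult_right_mono mvb)
      finally have a: "\<bar>(A z *v w) \<bullet> z\<bar> \<le> Cn TYPE('n) * norm (A z) * norm z * norm w"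
        by (simp add: mult_ac)
      have b: "\<bar>g z \<bullet> w\<bar> \<le> norm (g z) * norm w" by (rule Cauchy_Schwarz_ineq2)
      show ?thesis using a b by linarith
    qed
    have t3: "\<bar>(u \<bullet> (z - c)) * ((A z *v w) \<bullet> z + g z \<bullet> w)\<bar> \<le>
        norm u * r * (Cn TYPE('n) * norm (A z) * norm z * norm w + norm (g z) * norm w)"
      unfolding abs_mult by (rule mult_mono[OF t3a t3b]) (use rpos in auto)
    have "\<bar>phi' z w\<bar> \<le> norm u * (Cn TYPE('n) * norm (A z - A0) * norm w)
        + norm u * norm w * \<bar>g z \<bullet> z - lam\<bar>
        + norm u * r * (Cn TYPE('n) * norm (A z) * norm z * norm w + norm (g z) * norm w)"
      unfolding e using t1 t2 t3 by linarith
    also have "\<dots> = norm u * norm w * (Cn TYPE('n) * norm (A z - A0) + \<bar>g z \<bullet> z - lam\<bar> +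
       r * (Cn TYPE('n) * norm (A z) * norm z + norm (g z)))"
      by (simp add: algebra_simps)
    also have "\<dots> \<le> norm u * norm w * eta"
      by (rule mult_left_mono[OF bnd[OF z]]) simp
    finally show "norm (phi' z w) \<le> norm u * eta * norm w" by (simp add: mult_ac)
  qed
  have mvt: "norm (phi x - phi y) \<le> norm u * eta * norm (x - y)"
    by (rule differentiable_bound[OF convex_ball dphi obnd x y])
  have px: "phi x = - (s \<bullet> x)" using acrit_phi[OF cx, of u] unfolding phi_def by simp
  have py: "phi y = - (s \<bullet> y)" using acrit_phi[OF cy, of u] unfolding phi_def by simp
  have "phi x - phi y = s \<bullet> d" unfolding px py d_def by (simp add: inner_diff_right)
  also have "\<dots> = u \<bullet> (S *v d)" by (rule sw)
  also have "\<dots> = norm u ^ 2" unfolding u_def using proj_self_inner[OF c, of "S *v d"] by (simp add: inner_commute)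
  finally have "norm u ^ 2 \<le> norm u * eta * norm d"
    using mvt by (simp add: d_def norm_minus_commute)
  moreover have eta0: "0 \<le> eta"
  proof -
    have "0 \<le> Cn TYPE('n) * norm (A x - A0) + \<bar>g x \<bullet> x - lam\<bar> +
       r * (Cn TYPE('n) * norm (A x) * norm x + norm (g x))"
      using Cn_ge1[where 'n='n] rpos by (intro add_nonneg_nonneg mult_nonneg_nonneg) auto
    then show ?thesis using bnd[OF x] by linarith
  qed
  ultimately have ub: "norm u \<le> eta * norm d"
    by (cases "norm u = 0") (auto simp: power2_eq_square mult.assoc)
  have cdb: "\<bar>c \<bullet> d\<bar> \<le> r * norm d"
    unfolding d_def using cd_small[of x y c r] cx cy x y unfolding acrit_def by blast
  have "proj c (S *v proj c d) = u - (c \<bullet> d) *\<^sub>R proj c (S *v c)"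
    unfolding u_def by (simp add: proj_def matrix_vector_mult_diff_distrib algebra_simps
        matrix_vector_mult_scaleR inner_diff_right)
  then have "norm (proj c (S *v proj c d) + (c \<bullet> d) *\<^sub>R c) \<le>
      norm u + \<bar>c \<bullet> d\<bar> * norm (proj c (S *v c)) + \<bar>c \<bullet> d\<bar>"
  proof -
    assume eq: "proj c (S *v proj c d) = u - (c \<bullet> d) *\<^sub>R proj c (S *v c)"
    have "norm (u - (c \<bullet> d) *\<^sub>R proj c (S *v c) + (c \<bullet> d) *\<^sub>R c) \<le>
        norm (u - (c \<bullet> d) *\<^sub>R proj c (S *v c)) + norm ((c \<bullet> d) *\<^sub>R c)"
      by (rule norm_triangle_ineq)
    also have "norm (u - (c \<bullet> d) *\<^sub>R proj c (S *v c)) \<le> norm u + norm ((c \<bullet> d) *\<^sub>R proj c (S *v c))"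
      by (rule norm_triangle_ineq4)
    finally show ?thesis using c eq by simp
  qed
  also have "\<dots> \<le> eta * norm d + (r * norm d) * (Cn TYPE('n) * norm S) + r * norm d"
  proof -
    have "norm (proj c (S *v c)) \<le> Cn TYPE('n) * norm S"
      using proj_norm_le[OF c, of "S *v c"] mvb[of S c] c by simp
    then have "\<bar>c \<bullet> d\<bar> * norm (proj c (S *v c)) \<le> (r * norm d) * (Cn TYPE('n) * norm S)"
      using cdb by (intro mult_mono) auto
    then show ?thesis using ub cdb by linarith
  qed
  also have "\<dots> = (eta + r * (Cn TYPE('n) * norm S + 1)) * norm d" by (simp add: algebra_simps)
  finally have "K * norm (proj c (S *v proj c d) + (c \<bullet> d) *\<^sub>R c) \<le> K * ((eta + r * (Cn TYPE('n) * norm S + 1)) * norm d)"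
    using Kpos by (intro mult_left_mono) auto
  then have "norm d \<le> K * ((eta + r * (Cn TYPE('n) * norm S + 1)) * norm d)"
    using Kb[of d] by linarith
  then have "norm d \<le> (K * (eta + r * (Cn TYPE('n) * norm S + 1))) * norm d" by (simp add: mult_ac)
  moreover have "norm d > 0" using neq by (simp add: d_def)
  ultimately show False using small by (simp add: mult_le_cancel_right2 not_less[symmetric])
qed



lemma norm4: "norm (a - b + c + d) \<le> norm a + norm b + norm c + norm (d::'a::real_normed_vector)"
proof -
  have "norm (a - b + c + d) \<le> norm (a - b + c) + norm d" by (rule norm_triangle_ineq)
  moreover have "norm (a - b + c) \<le> norm (a - b) + norm c" by (rule norm_triangle_ineq)
  moreover have "norm (a - b) \<le> norm a + norm b" by (rule norm_triangle_ineq4)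
  ultimately show ?thesis by linarith
qed

lemma norm3: "norm (a + b + c) \<le> norm a + norm b + norm (c::'a::real_normed_vector)"
proof -
  have "norm (a + b + c) \<le> norm (a + b) + norm c" by (rule norm_triangle_ineq)
  moreover have "norm (a + b) \<le> norm a + norm b" by (rule norm_triangle_ineq)
  ultimately show ?thesis by linarith
qed

lemma nondeg_est:
  fixes g :: "real^'n \<Rightarrow> real^'n" and A :: "real^'n \<Rightarrow> real^'n^'n"
  assumes c: "norm c = 1" and Kpos: "K > 0"
    and Kb: "\<And>v. norm v \<le> K * norm (proj c (transpose S *v proj c v) + (c \<bullet> v) *\<^sub>R c)"
    and Sdef: "S = A0 - lam *\<^sub>R mat 1"
    and x: "norm x = 1" and xc: "norm (x - c) \<le> r"
    and bnd: "r * (Cn TYPE('n) * norm (A x) + \<bar>g x \<bullet> x\<bar>) + Cn TYPE('n) * norm (A0 - A x)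
        + r * (Cn TYPE('n) * norm A0) + \<bar>lam\<bar> * r + \<bar>g x \<bullet> x - lam\<bar> + r \<le> eta"
    and small: "K * eta < 1"
  shows "andeg g A x"
  unfolding andeg_def
proof (intro allI impI, elim conjE)
  fix v :: "real^'n"
  assume vx: "v \<bullet> x = 0"
    and H: "\<forall>w. w \<bullet> x = 0 \<longrightarrow> (A x *v w) \<bullet> v - (g x \<bullet> x) * (v \<bullet> w) = 0"
  define mu where "mu = g x \<bullet> x"
  define y where "y = transpose (A x) *v v - mu *\<^sub>R v"
  have yw: "(A x *v w) \<bullet> v - mu * (v \<bullet> w) = y \<bullet> w" for w
  proof -
    have "(A x *v w) \<bullet> v = (transpose (A x) *v v) \<bullet> w"
      using dot_lmul_matrix[of v "A x" w] by (simp add: inner_commute)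
    then show ?thesis unfolding y_def by (simp add: inner_diff_left inner_diff_right inner_commute)
  qed
  have "proj x y \<bullet> x = 0" using proj_orth[OF x, of y] by (simp add: inner_commute)
  then have "y \<bullet> proj x y = 0" using H yw unfolding mu_def by metis
  then have "norm (proj x y) = 0" using proj_self_inner[OF x, of y] by (simp add: inner_commute)
  then have yx: "y = (x \<bullet> y) *\<^sub>R x" by (simp add: proj_def)
  have cv: "\<bar>c \<bullet> v\<bar> \<le> r * norm v"
  proof -
    have "c \<bullet> v = (c - x) \<bullet> v" using vx by (simp add: inner_diff_left inner_commute[of x v])
    also have "\<bar>\<dots>\<bar> \<le> norm (c - x) * norm v" by (rule Cauchy_Schwarz_ineq2)
    also have "\<dots> \<le> r * norm v" using xc by (simp add: mult_right_mono norm_minus_commute)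
    finally show ?thesis .
  qed
  have r0: "r \<ge> 0" using xc norm_ge_zero order_trans by blast
  have i: "norm (proj c y) \<le> r * (Cn TYPE('n) * norm (A x) + \<bar>mu\<bar>) * norm v"
  proof -
    have cc: "c \<bullet> c = 1" using c norm_eq_1 by blast
    have p1: "proj c (x - c) = proj c x" by (simp add: proj_def inner_diff_right cc algebra_simps)
    have "proj c y = proj c ((x \<bullet> y) *\<^sub>R x)" by (rule arg_cong[where f="proj c"], rule yx)
    also have "\<dots> = (x \<bullet> y) *\<^sub>R proj c x" by (simp add: proj_def algebra_simps)
    finally have "proj c y = (x \<bullet> y) *\<^sub>R proj c (x - c)" using p1 by simp
    then have "norm (proj c y) = \<bar>x \<bullet> y\<bar> * norm (proj c (x - c))" by simp
    also have "\<dots> \<le> ((Cn TYPE('n) * norm (A x) + \<bar>mu\<bar>) * norm v) * r"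
    proof (rule mult_mono)
      have "\<bar>x \<bullet> y\<bar> \<le> norm x * norm y" by (rule Cauchy_Schwarz_ineq2)
      also have "\<dots> = norm y" using x by simp
      also have "\<dots> \<le> norm (transpose (A x) *v v) + norm (mu *\<^sub>R v)"
        unfolding y_def by (rule norm_triangle_ineq4)
      also have "\<dots> \<le> Cn TYPE('n) * norm (A x) * norm v + \<bar>mu\<bar> * norm v"
        using mvbT[of "A x" v] by simp
      finally show "\<bar>x \<bullet> y\<bar> \<le> (Cn TYPE('n) * norm (A x) + \<bar>mu\<bar>) * norm v"
        by (simp add: algebra_simps)
      show "norm (proj c (x - c)) \<le> r" using proj_norm_le[OF c, of "x - c"] xc by simp
    qed (use Cn_ge1[where 'n='n] in auto)
    finally show ?thesis by (simp add: mult_ac)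
  qed
  have Zeq: "transpose S *v proj c v - y = transpose (A0 - A x) *v v - (c \<bullet> v) *\<^sub>R (transpose A0 *v c)
      + (lam * (c \<bullet> v)) *\<^sub>R c + (mu - lam) *\<^sub>R v"
    unfolding Sdef y_def proj_def
    by (simp add: transpose_minus transpose_scalar matrix_vector_mult_diff_rdistrib
        matrix_vector_mult_diff_distrib matrix_vector_mult_scaleR
        scaleR_matrix_vector_assoc[symmetric] algebra_simps)
  have ii: "norm (proj c (transpose S *v proj c v - y)) \<le>
      (Cn TYPE('n) * norm (A0 - A x) + r * (Cn TYPE('n) * norm A0) + \<bar>lam\<bar> * r + \<bar>mu - lam\<bar>) * norm v"
  proof -
    have "norm (proj c (transpose S *v proj c v - y)) \<le> norm (transpose S *v proj c v - y)"
      by (rule proj_norm_le[OF c])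
    also have "\<dots> \<le> norm (transpose (A0 - A x) *v v) + norm ((c \<bullet> v) *\<^sub>R (transpose A0 *v c))
        + norm ((lam * (c \<bullet> v)) *\<^sub>R c) + norm ((mu - lam) *\<^sub>R v)"
      unfolding Zeq by (rule norm4)
    also have "\<dots> \<le> Cn TYPE('n) * norm (A0 - A x) * norm v + (r * norm v) * (Cn TYPE('n) * norm A0)
        + \<bar>lam\<bar> * (r * norm v) + \<bar>mu - lam\<bar> * norm v"
    proof -
      have a: "norm (transpose (A0 - A x) *v v) \<le> Cn TYPE('n) * norm (A0 - A x) * norm v"
        by (rule mvbT)
      have b: "norm ((c \<bullet> v) *\<^sub>R (transpose A0 *v c)) \<le> (r * norm v) * (Cn TYPE('n) * norm A0)"
        using mvbT[of A0 c] c cv by (simp add: mult_mono)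
      have d: "norm ((lam * (c \<bullet> v)) *\<^sub>R c) \<le> \<bar>lam\<bar> * (r * norm v)"
        using c cv by (simp add: abs_mult mult_left_mono)
      show ?thesis using a b d by simp
    qed
    also have "\<dots> = (Cn TYPE('n) * norm (A0 - A x) + r * (Cn TYPE('n) * norm A0) + \<bar>lam\<bar> * r + \<bar>mu - lam\<bar>) * norm v"
      by (simp add: algebra_simps)
    finally show ?thesis .
  qed
  have M1eq: "proj c (transpose S *v proj c v) + (c \<bullet> v) *\<^sub>R c =
      proj c y + proj c (transpose S *v proj c v - y) + (c \<bullet> v) *\<^sub>R c"
    by (simp add: proj_def algebra_simps inner_diff_right)
  have "norm (proj c (transpose S *v proj c v) + (c \<bullet> v) *\<^sub>R c) \<le>
      norm (proj c y) + norm (proj c (transpose S *v proj c v - y)) + norm ((c \<bullet> v) *\<^sub>R c)"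
    unfolding M1eq by (rule norm3)
  also have "\<dots> \<le> r * (Cn TYPE('n) * norm (A x) + \<bar>mu\<bar>) * norm v +
      (Cn TYPE('n) * norm (A0 - A x) + r * (Cn TYPE('n) * norm A0) + \<bar>lam\<bar> * r + \<bar>mu - lam\<bar>) * norm v
      + r * norm v"
    using i ii cv c by simp
  also have "\<dots> = (r * (Cn TYPE('n) * norm (A x) + \<bar>mu\<bar>) + Cn TYPE('n) * norm (A0 - A x)
        + r * (Cn TYPE('n) * norm A0) + \<bar>lam\<bar> * r + \<bar>mu - lam\<bar> + r) * norm v"
    by (simp add: algebra_simps)
  also have "\<dots> \<le> eta * norm v"
    using bnd unfolding mu_def by (intro mult_right_mono) auto
  finally have "K * norm (proj c (transpose S *v proj c v) + (c \<bullet> v) *\<^sub>R c) \<le> K * (eta * norm v)"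
    using Kpos by (intro mult_left_mono) auto
  then have "norm v \<le> (K * eta) * norm v" using Kb[of v] by (simp add: mult_ac)
  then show "v = 0" using small
    by (metis mult_le_cancel_right1 norm_eq_zero norm_ge_zero not_less order_le_less)
qed



lemma local_stab:
  fixes gF gG :: "real^'n \<Rightarrow> real^'n" and AF AG :: "real^'n \<Rightarrow> real^'n^'n"
  assumes U: "open U" and cU: "c \<in> U"
    and dF: "\<And>z. z \<in> U \<Longrightarrow> (gF has_derivative (\<lambda>w. AF z *v w)) (at z)"
    and dG: "\<And>z. z \<in> U \<Longrightarrow> (gG has_derivative (\<lambda>w. AG z *v w)) (at z)"
    and cAF: "continuous_on U AF" and cAG: "continuous_on U AG"
    and crit: "acrit gF c" and nd: "andeg gF AF c"
  shows "\<exists>r>0. \<exists>\<delta>>0. \<forall>t. \<bar>t\<bar> < \<delta> \<longrightarrow>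
     (\<forall>x y. x \<in> ball c r \<longrightarrow> y \<in> ball c r \<longrightarrow> acrit (\<lambda>z. gF z + t *\<^sub>R gG z) x \<longrightarrow>
         acrit (\<lambda>z. gF z + t *\<^sub>R gG z) y \<longrightarrow> x = y) \<and>
     (\<forall>x\<in>ball c r. acrit (\<lambda>z. gF z + t *\<^sub>R gG z) x \<longrightarrow>
         andeg (\<lambda>z. gF z + t *\<^sub>R gG z) (\<lambda>z. AF z + t *\<^sub>R AG z) x)"
proof -
  have c: "norm c = 1" using crit unfolding acrit_def by simp
  define lam where "lam = gF c \<bullet> c"
  define A0 where "A0 = AF c"
  define S where "S = A0 - lam *\<^sub>R mat 1"
  have ndS: "v = 0" if vc: "v \<bullet> c = 0" and hw: "\<And>w. w \<bullet> c = 0 \<Longrightarrow> (S *v w) \<bullet> v = 0" for v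
  proof -
    have "(AF c *v w) \<bullet> v - (gF c \<bullet> c) * (v \<bullet> w) = 0" if wc: "w \<bullet> c = 0" for w
    proof -
      have "(S *v w) \<bullet> v = (AF c *v w) \<bullet> v - lam * (w \<bullet> v)"
        unfolding S_def A0_def
        by (simp add: matrix_vector_mult_diff_rdistrib scaleR_matrix_vector_assoc[symmetric]
          inner_diff_left)
      then show ?thesis using hw[OF wc] unfolding lam_def by (simp add: inner_commute[of w v])
    qed
    then show ?thesis using nd vc unfolding andeg_def by blast
  qed
  obtain K where Kpos: "K > 0"
    and Kb1: "\<And>v. norm v \<le> K * norm (proj c (transpose S *v proj c v) + (c \<bullet> v) *\<^sub>R c)"
    and Kb2: "\<And>d. norm d \<le> K * norm (proj c (S *v proj c d) + (c \<bullet> d) *\<^sub>R c)"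
    using lin_alg[OF c, of S] ndS by blast
  define Cnn where "Cnn = Cn TYPE('n)"
  have Cnn1: "Cnn \<ge> 1" unfolding Cnn_def by (rule Cn_ge1)
  define Bd where "Bd = 2 * Cnn * (norm A0 + 1) + norm (gF c) + 1 + \<bar>lam\<bar> + 1"
  define Ctot where "Ctot = Bd + Cnn + 1 + Cnn * norm A0 + \<bar>lam\<bar> + 2 + Cnn * norm S + 1"
  have Bd0: "Bd \<ge> 0" unfolding Bd_def using Cnn1 by simp
  have Ctot1: "Ctot \<ge> 1" unfolding Ctot_def using Bd0 Cnn1 by simp
  define et where "et = min (1/2) (1 / (4 * K * Ctot))"
  have et0: "et > 0" unfolding et_def using Kpos Ctot1 by simp
  have et_half: "et \<le> 1/2" unfolding et_def by simp
  have etK: "K * et * Ctot \<le> 1/4"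
  proof -
    have "et \<le> 1 / (4 * K * Ctot)" unfolding et_def by simp
    then have "K * Ctot * et \<le> K * Ctot * (1 / (4 * K * Ctot))"
      using Kpos Ctot1 by (intro mult_left_mono) auto
    also have "\<dots> = 1/4" using Kpos Ctot1 by simp
    finally show ?thesis by (simp add: mult_ac)
  qed
  define gt where "gt t z = gF z + t *\<^sub>R gG z" for t z
  define At where "At t z = AF z + t *\<^sub>R AG z" for t z
  define Phi where "Phi p = norm (At (snd p) (fst p) - A0) + \<bar>gt (snd p) (fst p) \<bullet> fst p - lam\<bar>
      + norm (gt (snd p) (fst p) - gF c)" for p :: "(real^'n) \<times> real"
  have cgF: "continuous_on U gF"
    using dF by (meson continuous_at_imp_continuous_on has_derivative_continuous)
  have cgG: "continuous_on U gG"
    using dG by (meson continuous_at_imp_continuous_on has_derivative_continuous)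
  have cPhi: "continuous_on (U \<times> UNIV) Phi"
  proof -
    have 1: "continuous_on (U \<times> UNIV) (\<lambda>p. AF (fst p))"
      by (rule continuous_on_compose2[OF cAF continuous_on_fst]) auto
    have 2: "continuous_on (U \<times> UNIV) (\<lambda>p. AG (fst p))"
      by (rule continuous_on_compose2[OF cAG continuous_on_fst]) auto
    have 3: "continuous_on (U \<times> UNIV) (\<lambda>p. gF (fst p))"
      by (rule continuous_on_compose2[OF cgF continuous_on_fst]) auto
    have 4: "continuous_on (U \<times> UNIV) (\<lambda>p. gG (fst p))"
      by (rule continuous_on_compose2[OF cgG continuous_on_fst]) auto
    show ?thesis unfolding Phi_def gt_def At_def
      by (intro continuous_intros 1 2 3 4)
  qed
  have "isCont Phi (c, 0)"
    using cPhi cU U by (simp add: continuous_on_eq_continuous_at open_Times)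
  moreover have Phi0: "Phi (c, 0) = 0" unfolding Phi_def gt_def At_def A0_def lam_def by simp
  ultimately obtain e where e0: "e > 0" and he: "\<And>p. dist p (c, 0) < e \<Longrightarrow> Phi p < et"
    using et0 unfolding continuous_at_eps_delta
    by (metis dist_real_def diff_zero abs_less_iff)
  obtain r0 where r00: "r0 > 0" and r0U: "ball c r0 \<subseteq> U"
    using U cU open_contains_ball by blast
  define r where "r = min (min (e/2) et) r0"
  define \<delta> where "\<delta> = e/2"
  have r0: "r > 0" unfolding r_def using e0 et0 r00 by simp
  have rU: "ball c r \<subseteq> U" using r0U unfolding r_def by auto
  have ret: "r \<le> et" unfolding r_def by simp
  have small_pt: "norm (At t z - A0) < et \<and> \<bar>gt t z \<bullet> z - lam\<bar> < et \<and> norm (gt t z - gF c) < et"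
    if z: "z \<in> ball c r" and t: "\<bar>t\<bar> < \<delta>" for z t
  proof -
    have "dist (z, t) (c, 0) = sqrt ((dist z c)\<^sup>2 + (dist t 0)\<^sup>2)" by (rule dist_Pair_Pair)
    also have "\<dots> \<le> dist z c + dist t 0" by (rule sqrt_sum_squares_le_sum) auto
    also have "\<dots> < e/2 + e/2"
      using z t unfolding r_def \<delta>_def by (intro add_strict_mono) (auto simp: dist_commute)
    finally have "Phi (z, t) < et" using he by simp
    then have "norm (At t z - A0) + \<bar>gt t z \<bullet> z - lam\<bar> + norm (gt t z - gF c) < et"
      unfolding Phi_def by simp
    moreover have "norm (At t z - A0) \<ge> 0" "\<bar>gt t z \<bullet> z - lam\<bar> \<ge> 0" "norm (gt t z - gF c) \<ge> 0"
      by auto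
    ultimately show ?thesis by linarith
  qed
  have zb: "norm z \<le> 2" if "z \<in> ball c r" for z
  proof -
    have "norm z \<le> norm c + norm (z - c)" by (metis add.commute diff_add_cancel norm_triangle_ineq)
    also have "norm (z - c) \<le> r" using that by (simp add: dist_norm norm_minus_commute)
    finally show ?thesis using c ret et_half by simp
  qed
  have derv: "(gt t has_derivative (\<lambda>w. At t z *v w)) (at z)" if "z \<in> U" for t z
  proof -
    have "(gt t has_derivative (\<lambda>w. AF z *v w + t *\<^sub>R (AG z *v w))) (at z)"
      unfolding gt_def by (intro derivative_intros dF dG that)
    then show ?thesis
      by (simp add: At_def matrix_vector_mult_add_rdistrib scaleR_matrix_vector_assoc)
  qed
  have d0: "\<delta> > 0" unfolding \<delta>_def using e0 by simp
  have UNIQ: "x = y" if t: "\<bar>t\<bar> < \<delta>" and x: "x \<in> ball c r" and y: "y \<in> ball c r"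
      and cx: "acrit (\<lambda>z. gF z + t *\<^sub>R gG z) x" and cy: "acrit (\<lambda>z. gF z + t *\<^sub>R gG z) y" for t x y
  proof -
    show "x = y"
    proof (rule uniq_est[OF c r0 _ Kpos Kb2 S_def _ _ x y])
      show "acrit (gt t) x" "acrit (gt t) y" using cx cy unfolding gt_def by auto
      show "\<And>z. z \<in> ball c r \<Longrightarrow> (gt t has_derivative (*v) (At t z)) (at z)"
        using derv rU by auto
      show "Cn TYPE('n) * norm (At t z - A0) + \<bar>gt t z \<bullet> z - lam\<bar> +
          r * (Cn TYPE('n) * norm (At t z) * norm z + norm (gt t z)) \<le> et * Ctot"
        if z: "z \<in> ball c r" for z
      proof -
        note sp = small_pt[OF z t]
        have a: "Cnn * norm (At t z - A0) \<le> Cnn * et" using sp Cnn1 by (intro mult_left_mono) auto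
        have nA: "norm (At t z) \<le> norm A0 + 1"
          using sp et_half norm_triangle_ineq2[of "At t z" A0] by linarith
        have ng: "norm (gt t z) \<le> norm (gF c) + 1"
          using sp et_half norm_triangle_ineq2[of "gt t z" "gF c"] by linarith
        have "Cnn * norm (At t z) * norm z \<le> Cnn * (norm A0 + 1) * 2"
          using nA zb[OF z] Cnn1 by (intro mult_mono) auto
        then have X: "Cnn * norm (At t z) * norm z + norm (gt t z) \<le> Bd"
          using ng unfolding Bd_def by linarith
        have "r * (Cnn * norm (At t z) * norm z + norm (gt t z)) \<le> et * Bd"
          using X ret r0 Cnn1 by (intro mult_mono) auto
        then have "Cnn * norm (At t z - A0) + \<bar>gt t z \<bullet> z - lam\<bar> +
          r * (Cnn * norm (At t z) * norm z + norm (gt t z)) \<le> Cnn * et + et + et * Bd"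
          using a sp by linarith
        also have "\<dots> \<le> et * Ctot" unfolding Ctot_def using et0 Cnn1
          by (simp add: algebra_simps mult_nonneg_nonneg)
        finally show ?thesis unfolding Cnn_def .
      qed
      have "K * (et * Ctot + r * (Cn TYPE('n) * norm S + 1)) \<le> K * (et * Ctot + et * Ctot)"
      proof -
        have "Cn TYPE('n) * norm S + 1 \<le> Ctot" unfolding Ctot_def Cnn_def[symmetric] using Bd0 Cnn1 by simp
        then have "r * (Cn TYPE('n) * norm S + 1) \<le> et * Ctot"
          using ret r0 Cnn1 unfolding Cnn_def by (intro mult_mono) auto
        then show ?thesis using Kpos by (intro mult_left_mono) (auto simp: mult.commute)
      qed
      also have "\<dots> = 2 * (K * et * Ctot)" by (simp add: algebra_simps)
      also have "\<dots> < 1" using etK by simp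
      finally show "K * (et * Ctot + r * (Cn TYPE('n) * norm S + 1)) < 1" .
    qed
  qed
  have NDEG: "andeg (\<lambda>z. gF z + t *\<^sub>R gG z) (\<lambda>z. AF z + t *\<^sub>R AG z) x"
    if t: "\<bar>t\<bar> < \<delta>" and x: "x \<in> ball c r" and cx: "acrit (\<lambda>z. gF z + t *\<^sub>R gG z) x" for t x
  proof -
    have xn: "norm x = 1" using cx unfolding acrit_def by simp
    have xc: "norm (x - c) \<le> r" using x by (simp add: dist_norm norm_minus_commute)
    have "andeg (gt t) (At t) x"
    proof (rule nondeg_est[OF c Kpos Kb1 S_def xn xc])
      note sp = small_pt[OF x t]
      have a: "Cnn * norm (A0 - At t x) \<le> Cnn * et" using sp Cnn1
        by (intro mult_left_mono) (auto simp: norm_minus_commute)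
      have nA: "norm (At t x) \<le> norm A0 + 1"
        using sp et_half norm_triangle_ineq2[of "At t x" A0] by linarith
      have mu: "\<bar>gt t x \<bullet> x\<bar> \<le> \<bar>lam\<bar> + 1" using sp et_half by linarith
      have "Cnn * norm (At t x) \<le> Cnn * (norm A0 + 1)" using nA Cnn1 by (intro mult_left_mono) auto
      then have X: "Cnn * norm (At t x) + \<bar>gt t x \<bullet> x\<bar> \<le> Bd"
      proof -
        have "0 \<le> Cnn * (norm A0 + 1)" using Cnn1 by simp
        moreover have "0 \<le> norm (gF c)" by simp
        ultimately show ?thesis using mu \<open>Cnn * norm (At t x) \<le> Cnn * (norm A0 + 1)\<close>
          unfolding Bd_def by linarith
      qed
      have b1: "r * (Cnn * norm (At t x) + \<bar>gt t x \<bullet> x\<bar>) \<le> et * Bd"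
        using X ret r0 Cnn1 by (intro mult_mono) auto
      have b2: "r * (Cnn * norm A0) \<le> et * (Cnn * norm A0)"
        using ret Cnn1 by (intro mult_right_mono) auto
      have b3: "\<bar>lam\<bar> * r \<le> \<bar>lam\<bar> * et" using ret by (intro mult_left_mono) auto
      have "r * (Cnn * norm (At t x) + \<bar>gt t x \<bullet> x\<bar>) + Cnn * norm (A0 - At t x)
        + r * (Cnn * norm A0) + \<bar>lam\<bar> * r + \<bar>gt t x \<bullet> x - lam\<bar> + r \<le>
        et * Bd + Cnn * et + et * (Cnn * norm A0) + \<bar>lam\<bar> * et + et + et"
        using a b1 b2 b3 sp ret by linarith
      also have "\<dots> \<le> et * Ctot" unfolding Ctot_def using et0 Cnn1
        by (simp add: algebra_simps mult_nonneg_nonneg)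
      finally show "r * (Cn TYPE('n) * norm (At t x) + \<bar>gt t x \<bullet> x\<bar>) + Cn TYPE('n) * norm (A0 - At t x)
        + r * (Cn TYPE('n) * norm A0) + \<bar>lam\<bar> * r + \<bar>gt t x \<bullet> x - lam\<bar> + r \<le> et * Ctot"
        unfolding Cnn_def .
      show "K * (et * Ctot) < 1" using etK by (simp add: mult_ac)
    qed
    then show "andeg (\<lambda>z. gF z + t *\<^sub>R gG z) (\<lambda>z. AF z + t *\<^sub>R AG z) x"
      unfolding gt_def At_def by simp
  qed
  show ?thesis using r0 d0 UNIQ NDEG by blast
qed



definition tang :: "(real^'n \<Rightarrow> real^'n) \<Rightarrow> real^'n \<Rightarrow> real^'n" where
  "tang g x = g x - (g x \<bullet> x) *\<^sub>R x"

lemma acrit_tang: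
  assumes x: "norm x = 1"
  shows "acrit g x \<longleftrightarrow> tang g x = 0"
proof -
  have xx: "x \<bullet> x = 1" using x norm_eq_1 by blast
  have tx: "tang g x \<bullet> x = 0" by (simp add: tang_def inner_diff_left xx)
  show ?thesis
  proof
    assume a: "acrit g x"
    then have "g x \<bullet> tang g x = 0" using tx unfolding acrit_def by blast
    then have "tang g x \<bullet> tang g x = 0"
      using tx by (simp add: tang_def inner_diff_left inner_commute)
    then show "tang g x = 0" by simp
  next
    assume t: "tang g x = 0"
    show "acrit g x" unfolding acrit_def
    proof (intro conjI allI impI x)
      fix v assume "v \<bullet> x = 0"
      define a where "a = g x \<bullet> x"
      have gx: "g x = a *\<^sub>R x" using t unfolding tang_def a_def by simp
      have "g x \<bullet> v = a * (x \<bullet> v)" by (simp add: gx)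
      also have "x \<bullet> v = 0" using \<open>v \<bullet> x = 0\<close> by (simp add: inner_commute)
      finally show "g x \<bullet> v = 0" by simp
    qed
  qed
qed

lemma away:
  fixes gF gG :: "real^'n \<Rightarrow> real^'n"
  assumes U: "sphere 0 1 \<subseteq> U" and cgF: "continuous_on U gF" and cgG: "continuous_on U gG"
    and r: "r > 0" and CC: "\<And>x. acrit gF x \<Longrightarrow> x \<in> C"
  shows "\<exists>\<delta>>0. \<forall>t. \<bar>t\<bar> < \<delta> \<longrightarrow> (\<forall>x. acrit (\<lambda>z. gF z + t *\<^sub>R gG z) x \<longrightarrow> (\<exists>c\<in>C. x \<in> ball c r))"
proof -
  define Ks where "Ks = sphere (0::real^'n) 1 - (\<Union>c\<in>C. ball c r)"
  have cK: "compact Ks" unfolding Ks_def by (intro compact_diff compact_sphere open_UN) auto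
  have KU: "Ks \<subseteq> U" using U unfolding Ks_def by auto
  have ctG: "continuous_on (sphere 0 1) (\<lambda>x. norm (tang gG x))"
    unfolding tang_def by (intro continuous_intros continuous_on_subset[OF cgG U])
  have "bounded ((\<lambda>x. norm (tang gG x)) ` sphere 0 1)"
    by (intro compact_imp_bounded compact_continuous_image ctG compact_sphere)
  then obtain M0 where M0a: "\<forall>y\<in>(\<lambda>x. norm (tang gG x)) ` sphere 0 1. norm y \<le> M0"
    unfolding bounded_iff by blast
  have M0: "\<And>x. x \<in> sphere 0 1 \<Longrightarrow> norm (tang gG x) \<le> M0"
    using M0a by auto
  define M where "M = \<bar>M0\<bar>"
  have M: "\<And>x. x \<in> sphere 0 1 \<Longrightarrow> norm (tang gG x) \<le> M" "M \<ge> 0"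
    using M0 unfolding M_def by (auto intro: order_trans[OF _ abs_ge_self])
  have tlin: "tang (\<lambda>z. gF z + t *\<^sub>R gG z) x = tang gF x + t *\<^sub>R tang gG x" for t x
    by (simp add: tang_def algebra_simps inner_add_left)
  show ?thesis
  proof (cases "Ks = {}")
    case True
    show ?thesis
    proof (intro exI[of _ 1] conjI allI impI)
      fix t x assume "acrit (\<lambda>z. gF z + t *\<^sub>R gG z) x"
      then have "x \<in> sphere 0 1" unfolding acrit_def by simp
      then have "x \<in> (\<Union>c\<in>C. ball c r)" using True unfolding Ks_def by blast
      then show "\<exists>c\<in>C. x \<in> ball c r" by blast
    qed simp
  next
    case False
    have ctF: "continuous_on Ks (\<lambda>x. norm (tang gF x))"
      unfolding tang_def by (intro continuous_intros continuous_on_subset[OF cgF KU])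
    obtain x0 where x0: "x0 \<in> Ks" and x0min: "\<And>y. y \<in> Ks \<Longrightarrow> norm (tang gF x0) \<le> norm (tang gF y)"
      using continuous_attains_inf[OF cK False ctF] by blast
    define m where "m = norm (tang gF x0)"
    have m0: "m > 0"
    proof -
      have x0s: "norm x0 = 1" and x0n: "\<forall>c\<in>C. x0 \<notin> ball c r" using x0 unfolding Ks_def by auto
      have "\<not> acrit gF x0"
      proof
        assume "acrit gF x0"
        then have "x0 \<in> C" by (rule CC)
        then show False using x0n r by auto
      qed
      then have "tang gF x0 \<noteq> 0" using acrit_tang[OF x0s] by simp
      then show ?thesis unfolding m_def by simp
    qed
    show ?thesis
    proof (intro exI[of _ "m / (M + 1)"] conjI allI impI)
      show "m / (M + 1) > 0" using m0 M(2) by simp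
    next
      fix t x assume t: "\<bar>t\<bar> < m / (M + 1)" and cx: "acrit (\<lambda>z. gF z + t *\<^sub>R gG z) x"
      have xs: "norm x = 1" using cx unfolding acrit_def by simp
      show "\<exists>c\<in>C. x \<in> ball c r"
      proof (rule ccontr)
        assume "\<not> (\<exists>c\<in>C. x \<in> ball c r)"
        then have xK: "x \<in> Ks" unfolding Ks_def using xs by auto
        have "tang (\<lambda>z. gF z + t *\<^sub>R gG z) x = 0" using cx acrit_tang[OF xs] by blast
        then have "tang gF x + t *\<^sub>R tang gG x = 0" by (simp only: tlin)
        then have "tang gF x = - (t *\<^sub>R tang gG x)" by (simp add: eq_neg_iff_add_eq_0)
        then have "norm (tang gF x) = \<bar>t\<bar> * norm (tang gG x)" by simp
        also have "\<dots> \<le> \<bar>t\<bar> * M" using M(1)[of x] xs by (intro mult_left_mono) auto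
        also have "\<dots> \<le> \<bar>t\<bar> * (M + 1)" by (intro mult_left_mono) auto
        also have "\<dots> < m" using t M(2) by (simp add: pos_less_divide_eq)
        finally have "norm (tang gF x) < m" .
        then show False using x0min[OF xK] unfolding m_def by linarith
      qed
    qed
  qed
qed



lemma global_stab:
  fixes gF gG :: "real^'n \<Rightarrow> real^'n" and AF AG :: "real^'n \<Rightarrow> real^'n^'n"
  assumes U: "open U" and SU: "sphere 0 1 \<subseteq> U"
    and dF: "\<And>z. z \<in> U \<Longrightarrow> (gF has_derivative (\<lambda>w. AF z *v w)) (at z)"
    and dG: "\<And>z. z \<in> U \<Longrightarrow> (gG has_derivative (\<lambda>w. AG z *v w)) (at z)"
    and cAF: "continuous_on U AF" and cAG: "continuous_on U AG"
    and fin: "finite {x. acrit gF x}" and nd: "\<And>x. acrit gF x \<Longrightarrow> andeg gF AF x"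
  shows "\<exists>\<delta>>0. \<forall>t. \<bar>t\<bar> < \<delta> \<longrightarrow> finite {x. acrit (\<lambda>z. gF z + t *\<^sub>R gG z) x} \<and>
     card {x. acrit (\<lambda>z. gF z + t *\<^sub>R gG z) x} \<le> card {x. acrit gF x} \<and>
     (\<forall>x. acrit (\<lambda>z. gF z + t *\<^sub>R gG z) x \<longrightarrow> andeg (\<lambda>z. gF z + t *\<^sub>R gG z) (\<lambda>z. AF z + t *\<^sub>R AG z) x)"
proof -
  define C where "C = {x. acrit gF x}"
  define gt where "gt t z = gF z + t *\<^sub>R gG z" for t z
  define At where "At t z = AF z + t *\<^sub>R AG z" for t z
  define Q where "Q c rd \<longleftrightarrow> fst rd > 0 \<and> snd rd > 0 \<and> (\<forall>t. \<bar>t\<bar> < snd rd \<longrightarrow>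
     (\<forall>x y. x \<in> ball c (fst rd) \<longrightarrow> y \<in> ball c (fst rd) \<longrightarrow> acrit (gt t) x \<longrightarrow> acrit (gt t) y \<longrightarrow> x = y) \<and>
     (\<forall>x\<in>ball c (fst rd). acrit (gt t) x \<longrightarrow> andeg (gt t) (At t) x))" for c rd
  have "\<forall>c\<in>C. \<exists>rd. Q c rd"
  proof
    fix c assume cC: "c \<in> C"
    then have cc: "acrit gF c" unfolding C_def by simp
    have cU: "c \<in> U" using cc SU unfolding acrit_def by auto
    obtain r \<delta> where "r > 0" "\<delta> > 0" "\<forall>t. \<bar>t\<bar> < \<delta> \<longrightarrow>
     (\<forall>x y. x \<in> ball c r \<longrightarrow> y \<in> ball c r \<longrightarrow> acrit (gt t) x \<longrightarrow> acrit (gt t) y \<longrightarrow> x = y) \<and>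
     (\<forall>x\<in>ball c r. acrit (gt t) x \<longrightarrow> andeg (gt t) (At t) x)"
      using local_stab[OF U cU dF dG cAF cAG cc nd[OF cc]] unfolding gt_def At_def by blast
    then have "Q c (r, \<delta>)" unfolding Q_def by simp
    then show "\<exists>rd. Q c rd" by blast
  qed
  then obtain f where fQ: "\<forall>c\<in>C. Q c (f c)" using bchoice by blast
  have f1: "fst (f c) > 0" "snd (f c) > 0" if "c \<in> C" for c
    using fQ that unfolding Q_def by auto
  have fu: "x = y" if "c \<in> C" "\<bar>t\<bar> < snd (f c)" "x \<in> ball c (fst (f c))" "y \<in> ball c (fst (f c))"
     "acrit (gt t) x" "acrit (gt t) y" for c t x y
  proof -
    have "Q c (f c)" using fQ that(1) by blast
    then show ?thesis using that(2-6) unfolding Q_def by blast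
  qed
  have fn: "andeg (gt t) (At t) x" if "c \<in> C" "\<bar>t\<bar> < snd (f c)" "x \<in> ball c (fst (f c))"
     "acrit (gt t) x" for c t x
  proof -
    have "Q c (f c)" using fQ that(1) by blast
    then show ?thesis using that(2-4) unfolding Q_def by blast
  qed
  define r where "r = (if C = {} then 1 else Min ((\<lambda>c. fst (f c)) ` C))"
  define \<delta>1 where "\<delta>1 = (if C = {} then 1 else Min ((\<lambda>c. snd (f c)) ` C))"
  have finC: "finite C" using fin unfolding C_def .
  have r0: "r > 0" unfolding r_def using f1 finC by (auto simp: Min_gr_iff)
  have d10: "\<delta>1 > 0" unfolding \<delta>1_def using f1 finC by (auto simp: Min_gr_iff)
  have rle: "r \<le> fst (f c)" if "c \<in> C" for c
    unfolding r_def using that finC by (auto intro: Min_le)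
  have dle: "\<delta>1 \<le> snd (f c)" if "c \<in> C" for c
    unfolding \<delta>1_def using that finC by (auto intro: Min_le)
  have cgF: "continuous_on U gF"
    using dF by (meson continuous_at_imp_continuous_on has_derivative_continuous)
  have cgG: "continuous_on U gG"
    using dG by (meson continuous_at_imp_continuous_on has_derivative_continuous)
  obtain \<delta>2 where d20: "\<delta>2 > 0" and d2: "\<And>t x. \<bar>t\<bar> < \<delta>2 \<Longrightarrow> acrit (gt t) x \<Longrightarrow> \<exists>c\<in>C. x \<in> ball c r"
    using away[OF SU cgF cgG r0, of C] unfolding C_def gt_def by auto
  have main: "finite {x. acrit (gt t) x} \<and> card {x. acrit (gt t) x} \<le> card C \<and>
     (\<forall>x. acrit (gt t) x \<longrightarrow> andeg (gt t) (At t) x)" if t: "\<bar>t\<bar> < min \<delta>1 \<delta>2" for t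
  proof -
    define Ct where "Ct = {x. acrit (gt t) x}"
    define m where "m x = (SOME c. c \<in> C \<and> x \<in> ball c r)" for x
    have m: "m x \<in> C \<and> x \<in> ball (m x) r" if "x \<in> Ct" for x
    proof -
      have "\<exists>c. c \<in> C \<and> x \<in> ball c r" using d2[of t x] that t unfolding Ct_def by auto
      then show ?thesis unfolding m_def by (rule someI_ex)
    qed
    have tc: "\<bar>t\<bar> < snd (f c)" if "c \<in> C" for c using t dle[OF that] by simp
    have inj: "inj_on m Ct"
    proof (rule inj_onI)
      fix x y assume x: "x \<in> Ct" and y: "y \<in> Ct" and e: "m x = m y"
      have c: "m x \<in> C" using m[OF x] by simp
      have "x \<in> ball (m x) (fst (f (m x)))" using m[OF x] rle[OF c] by auto
      moreover have "y \<in> ball (m x) (fst (f (m x)))" using m[OF y] e rle[OF c] by auto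
      ultimately show "x = y" using fu[OF c tc[OF c]] x y unfolding Ct_def by blast
    qed
    have sub: "m ` Ct \<subseteq> C" using m by auto
    have "finite Ct" using inj_on_finite[OF inj sub finC] .
    moreover have "card Ct \<le> card C" using card_inj_on_le[OF inj sub finC] .
    moreover have "andeg (gt t) (At t) x" if "acrit (gt t) x" for x
    proof -
      have x: "x \<in> Ct" using that unfolding Ct_def by simp
      have c: "m x \<in> C" using m[OF x] by simp
      have "x \<in> ball (m x) (fst (f (m x)))" using m[OF x] rle[OF c] by auto
      then show ?thesis using fn[OF c tc[OF c]] that by blast
    qed
    ultimately show ?thesis unfolding Ct_def by blast
  qed
  have "min \<delta>1 \<delta>2 > 0" using d10 d20 by simp
  then show ?thesis
    using main unfolding C_def gt_def At_def by blast
qed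



lemma ext_crit:
  fixes h :: "real^'n \<Rightarrow> real"
  assumes x: "x \<in> sphere 0 1" and dh: "h differentiable (at x)"
    and ext: "(\<forall>y\<in>sphere 0 1. h y \<le> h x) \<or> (\<forall>y\<in>sphere 0 1. h x \<le> h y)"
  shows "sphere_crit h x"
  unfolding sphere_crit_def
proof (intro conjI allI impI x)
  fix v :: "real^'n" assume vx: "v \<bullet> x = 0"
  define L where "L = frechet_derivative h (at x)"
  have hL: "(h has_derivative L) (at x)" unfolding L_def using dh frechet_derivative_works by blast
  have lin: "linear L" using hL has_derivative_linear by blast
  show "frechet_derivative h (at x) v = 0"
  proof (cases "v = 0")
    case True
    then show ?thesis using lin linear_0 unfolding L_def by blast
  next
    case False
    define w where "w = (1 / norm v) *\<^sub>R v"
    have ww: "w \<bullet> w = 1" unfolding w_def using False by (simp add: dot_square_norm power2_eq_square)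
    have xx: "x \<bullet> x = 1" using x norm_eq_1 by auto
    have wx: "w \<bullet> x = 0" unfolding w_def using vx by simp
    define gam where "gam s = cos s *\<^sub>R x + sin s *\<^sub>R w" for s
    have gs: "gam s \<in> sphere 0 1" for s
    proof -
      have "gam s \<bullet> gam s = (cos s)^2 * (x \<bullet> x) + 2 * (cos s * sin s) * (w \<bullet> x) + (sin s)^2 * (w \<bullet> w)"
        unfolding gam_def by (simp add: inner_add_left inner_add_right inner_commute power2_eq_square algebra_simps)
      also have "\<dots> = 1" using xx ww wx by simp
      finally show ?thesis by (simp add: norm_eq_1)
    qed
    have g0: "gam 0 = x" unfolding gam_def by simp
    have dg: "(gam has_derivative (\<lambda>s. s *\<^sub>R w)) (at 0)"
      unfolding gam_def by (auto intro!: derivative_eq_intros)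
    have "((h \<circ> gam) has_derivative (L \<circ> (\<lambda>s. s *\<^sub>R w))) (at 0)"
      by (rule diff_chain_at[OF dg]) (simp add: g0 hL)
    then have der: "((h \<circ> gam) has_real_derivative L w) (at 0)"
      by (rule has_derivative_imp_has_field_derivative) (simp add: linear_scale[OF lin])
    have "L w = 0"
      using ext
    proof
      assume "\<forall>y\<in>sphere 0 1. h y \<le> h x"
      then show "L w = 0" using gs g0
        by (intro DERIV_local_max[OF der zero_less_one]) simp
    next
      assume "\<forall>y\<in>sphere 0 1. h x \<le> h y"
      then show "L w = 0" using gs g0
        by (intro DERIV_local_min[OF der zero_less_one]) simp
    qed
    have vw: "norm v *\<^sub>R w = v" unfolding w_def using False by simp
    have "L v = L (norm v *\<^sub>R w)" using vw by simp
    also have "\<dots> = norm v * L w" by (simp add: linear_scale[OF lin])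
    finally have "L v = 0" using \<open>L w = 0\<close> by simp
    then show ?thesis unfolding L_def .
  qed
qed

lemma sphere_infinite:
  assumes "CARD('n) \<ge> 2"
  shows "infinite (sphere (0::real^'n) 1)"
proof
  assume fin: "finite (sphere (0::real^'n) 1)"
  have "connected (sphere (0::real^'n) 1)"
    by (rule connected_sphere) (use assms in simp)
  then have "sphere (0::real^'n) 1 = {} \<or> (\<exists>a. sphere (0::real^'n) 1 = {a})"
    using connected_finite_iff_sing fin by blast
  moreover obtain k :: 'n where True by blast
  have a1: "axis k (1::real) \<in> sphere 0 1" by simp
  have a2: "- axis k (1::real) \<in> sphere 0 1" by simp
  have ne: "axis k (1::real) \<noteq> - axis k 1"
    by (metis axis_nth neg_equal_zero one_neq_zero vector_uminus_component)
  ultimately show False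
  proof (elim disjE exE conjE)
    assume "sphere (0::real^'n) 1 = {}" then show False using a1 by auto
  next
    fix a assume "sphere (0::real^'n) 1 = {a}"
    then have "axis k 1 = a" "- axis k 1 = a" using a1 a2 by auto
    then show False using ne by simp
  qed
qed

lemma two_crit:
  fixes h :: "real^'n \<Rightarrow> real"
  assumes n: "CARD('n) \<ge> 2" and dh: "\<And>x. x \<in> sphere 0 1 \<Longrightarrow> h differentiable (at x)"
    and fin: "finite (crit_set h)"
  shows "card (crit_set h) \<ge> 2"
proof -
  have ch: "continuous_on (sphere 0 1) h"
    using dh by (meson continuous_at_imp_continuous_on differentiable_imp_continuous_within)
  have ne: "sphere (0::real^'n) 1 \<noteq> {}" using sphere_infinite[OF n] by auto
  obtain a where a: "a \<in> sphere 0 1" "\<forall>y\<in>sphere 0 1. h y \<le> h a"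
    using continuous_attains_sup[OF compact_sphere ne ch] by blast
  obtain b where b: "b \<in> sphere 0 1" "\<forall>y\<in>sphere 0 1. h b \<le> h y"
    using continuous_attains_inf[OF compact_sphere ne ch] by blast
  have ca: "a \<in> crit_set h" using ext_crit[OF a(1) dh[OF a(1)]] a(2) unfolding crit_set_def by blast
  have cb: "b \<in> crit_set h" using ext_crit[OF b(1) dh[OF b(1)]] b(2) unfolding crit_set_def by blast
  have "a \<noteq> b"
  proof
    assume ab: "a = b"
    have "sphere 0 1 \<subseteq> crit_set h"
    proof
      fix y assume y: "y \<in> sphere (0::real^'n) 1"
      have "\<forall>z\<in>sphere 0 1. h z \<le> h y" using a b ab y by (metis order_antisym)
      then show "y \<in> crit_set h" using ext_crit[OF y dh[OF y]] unfolding crit_set_def by blast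
    qed
    then show False using fin sphere_infinite[OF n] finite_subset by blast
  qed
  then have "card {a, b} = 2" by simp
  moreover have "card {a, b} \<le> card (crit_set h)" using ca cb fin by (intro card_mono) auto
  ultimately show ?thesis by simp
qed



lemma Ck_mono:
  assumes "Ck_on k U f" "V \<subseteq> U"
  shows "Ck_on k V f"
  using assms(1)
proof (induction k arbitrary: f)
  case 0
  then show ?case using continuous_on_subset assms(2) by auto
next
  case (Suc k)
  then show ?case using assms(2) by auto
qed

lemma conn:
  fixes F G h :: "real^'n \<Rightarrow> real"
  assumes U: "open U" and SU: "sphere 0 1 \<subseteq> U" and F: "Ck_on 2 U F" and G: "Ck_on 2 U G"
    and h: "\<And>y. y \<in> U \<Longrightarrow> h y = s * F y + (s * t) * G y" and s: "s \<noteq> 0"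
  shows "sphere_crit h x \<longleftrightarrow> acrit (\<lambda>z. gradf F z + t *\<^sub>R gradf G z) x"
    and "x \<in> sphere 0 1 \<Longrightarrow> sphere_nondegenerate h x \<longleftrightarrow>
       andeg (\<lambda>z. gradf F z + t *\<^sub>R gradf G z) (\<lambda>z. hessm F z + t *\<^sub>R hessm G z) x"
proof -
  define g where "g z = gradf F z + t *\<^sub>R gradf G z" for z
  define A where "A z = hessm F z + t *\<^sub>R hessm G z" for z
  have D1: "frechet_derivative h (at z) v = s * (g z \<bullet> v)" if "z \<in> U" for z v
    using comb_deriv(1)[OF U F G that, of h s "s * t"] h
    by (simp add: g_def inner_add_left algebra_simps)
  have D2e: "D2 h z v w = s * ((A z *v w) \<bullet> v)" if "z \<in> U" for z v w
    using comb_deriv(3)[OF U F G that, of h s "s * t" v w] h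
    by (simp add: A_def matrix_vector_mult_add_rdistrib scaleR_matrix_vector_assoc[symmetric]
        inner_add_left algebra_simps)
  show "sphere_crit h x \<longleftrightarrow> acrit (\<lambda>z. gradf F z + t *\<^sub>R gradf G z) x"
  proof (cases "x \<in> sphere 0 1")
    case True
    then have xU: "x \<in> U" using SU by auto
    show ?thesis unfolding sphere_crit_def acrit_def g_def[symmetric]
      using True D1[OF xU] s by auto
  next
    case False
    then show ?thesis unfolding sphere_crit_def acrit_def by auto
  qed
  assume x: "x \<in> sphere 0 1"
  then have xU: "x \<in> U" using SU by auto
  have hs: "sphere_hessian h x v w = s * ((A x *v w) \<bullet> v - (g x \<bullet> x) * (v \<bullet> w))" for v w
    unfolding sphere_hessian_def using D1[OF xU] D2e[OF xU] by (simp add: algebra_simps)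
  show "sphere_nondegenerate h x \<longleftrightarrow>
       andeg (\<lambda>z. gradf F z + t *\<^sub>R gradf G z) (\<lambda>z. hessm F z + t *\<^sub>R hessm G z) x"
    unfolding sphere_nondegenerate_def andeg_def g_def[symmetric] A_def[symmetric] hs
    using s by simp
qed

lemma stab_defs:
  fixes F G :: "real^'n \<Rightarrow> real"
  assumes n: "CARD('n) \<ge> 2" and mF: "morse_on_sphere F" and cF: "card (crit_set F) = 2"
    and sG: "smooth_on_sphere G"
  shows "\<exists>\<delta>>0. \<forall>t s h. \<bar>t\<bar> < \<delta> \<longrightarrow> s \<noteq> 0 \<longrightarrow> (\<forall>x. h x = s * F x + (s * t) * G x) \<longrightarrow>
      morse_on_sphere h \<and> card (crit_set h) = 2"
proof -
  obtain U1 where U1: "sphere 0 1 \<subseteq> U1" "open U1" "\<And>k. Ck_on k U1 F"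
    using mF unfolding morse_on_sphere_def smooth_on_sphere_def smooth_on_def by blast
  obtain U2 where U2: "sphere 0 1 \<subseteq> U2" "open U2" "\<And>k. Ck_on k U2 G"
    using sG unfolding smooth_on_sphere_def smooth_on_def by blast
  define U where "U = U1 \<inter> U2"
  have U: "open U" "sphere 0 1 \<subseteq> U" unfolding U_def using U1 U2 by auto
  have CF: "Ck_on k U F" for k using U1(3) Ck_mono unfolding U_def by blast
  have CG: "Ck_on k U G" for k using U2(3) Ck_mono unfolding U_def by blast
  have dF: "\<And>z. z \<in> U \<Longrightarrow> (gradf F has_derivative (\<lambda>w. hessm F z *v w)) (at z)"
    using grad_deriv[OF CF] by blast
  have dG: "\<And>z. z \<in> U \<Longrightarrow> (gradf G has_derivative (\<lambda>w. hessm G z *v w)) (at z)"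
    using grad_deriv[OF CG] by blast
  have critF: "sphere_crit F x \<longleftrightarrow> acrit (gradf F) x" for x
    using conn(1)[OF U CF CG, of F 1 0 x] by simp
  have ndF: "andeg (gradf F) (hessm F) x" if "acrit (gradf F) x" for x
  proof -
    have "sphere_crit F x" using that critF by simp
    then have x: "x \<in> sphere 0 1" and "sphere_nondegenerate F x"
      using mF unfolding morse_on_sphere_def sphere_crit_def by auto
    then show ?thesis using conn(2)[OF U CF CG, of F 1 0 x] by simp
  qed
  have CS: "crit_set F = {x. acrit (gradf F) x}" unfolding crit_set_def using critF by auto
  have finF: "finite {x. acrit (gradf F) x}" using cF CS card.infinite by fastforce
  obtain \<delta> where d0: "\<delta> > 0" and dd: "\<And>t. \<bar>t\<bar> < \<delta> \<Longrightarrow>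
     finite {x. acrit (\<lambda>z. gradf F z + t *\<^sub>R gradf G z) x} \<and>
     card {x. acrit (\<lambda>z. gradf F z + t *\<^sub>R gradf G z) x} \<le> card {x. acrit (gradf F) x} \<and>
     (\<forall>x. acrit (\<lambda>z. gradf F z + t *\<^sub>R gradf G z) x \<longrightarrow>
        andeg (\<lambda>z. gradf F z + t *\<^sub>R gradf G z) (\<lambda>z. hessm F z + t *\<^sub>R hessm G z) x)"
    using global_stab[OF U dF dG hess_cont[OF CF] hess_cont[OF CG] finF ndF] by blast
  show ?thesis
  proof (intro exI[of _ \<delta>] conjI d0 allI impI)
    fix t s :: real and h :: "real^'n \<Rightarrow> real"
    assume t: "\<bar>t\<bar> < \<delta>" and s: "s \<noteq> 0" and h: "\<forall>x. h x = s * F x + (s * t) * G x"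
    have hU: "\<And>y. y \<in> U \<Longrightarrow> h y = s * F y + (s * t) * G y" using h by simp
    have c1: "sphere_crit h x \<longleftrightarrow> acrit (\<lambda>z. gradf F z + t *\<^sub>R gradf G z) x" for x
      by (rule conn(1)[of U F G h s t x]) (use U CF CG hU s in auto)
    have c2: "sphere_nondegenerate h x \<longleftrightarrow>
       andeg (\<lambda>z. gradf F z + t *\<^sub>R gradf G z) (\<lambda>z. hessm F z + t *\<^sub>R hessm G z) x"
      if "x \<in> sphere 0 1" for x
      by (rule conn(2)[of U F G h s t x]) (use U CF CG hU s that in auto)
    have CSh: "crit_set h = {x. acrit (\<lambda>z. gradf F z + t *\<^sub>R gradf G z) x}"
      unfolding crit_set_def using c1 by auto
    have smooth: "smooth_on_sphere h"
      unfolding smooth_on_sphere_def smooth_on_def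
    proof (intro exI[of _ U] conjI allI U)
      fix k
      have "Ck_on k U (\<lambda>x. s * F x + (s * t) * G x)" by (rule Ck_lin[OF U(1) CF CG])
      then show "Ck_on k U h" by (rule Ck_cong[OF U(1)]) (simp add: hU)
    qed
    have morse: "morse_on_sphere h"
      unfolding morse_on_sphere_def
    proof (intro conjI allI impI smooth)
      fix x assume "sphere_crit h x"
      then have x: "x \<in> sphere 0 1" and ax: "acrit (\<lambda>z. gradf F z + t *\<^sub>R gradf G z) x"
        using c1 unfolding sphere_crit_def by auto
      show "sphere_nondegenerate h x" using c2[OF x] dd[OF t] ax by blast
    qed
    have fin: "finite (crit_set h)" using dd[OF t] CSh by simp
    have le: "card (crit_set h) \<le> 2" using dd[OF t] CSh CS cF by simp
    have dh: "h differentiable (at x)" if "x \<in> sphere 0 1" for x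
      using comb_deriv(2)[OF U(1) CF CG, of x h s "s * t"] that U(2) hU by auto
    have ge: "card (crit_set h) \<ge> 2" by (rule two_crit[OF n dh fin])
    show "morse_on_sphere h" by (rule morse)
    show "card (crit_set h) = 2" using le ge by simp
  qed
qed



theorem lemma4p1:
  fixes f1 f2 f3 f4 :: "real^'n \<Rightarrow> real"
  assumes "CARD('n) \<ge> 2"
    and "\<forall>f\<in>{f1, f2, f3, f4}. morse_on_sphere f \<and> card (crit_set f) = 2"
    and "\<forall>i<4. \<forall>j<4. i \<noteq> j \<longrightarrow> crit_set ([f1, f2, f3, f4] ! i) \<inter> crit_set ([f1, f2, f3, f4] ! j) = {}"
  shows "\<exists>\<epsilon>0>0. \<forall>\<epsilon>. 0 < \<epsilon> \<and> \<epsilon> < \<epsilon>0 \<longrightarrow>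
           (let g = [(\<lambda>x. \<epsilon>^3 * f1 x), (\<lambda>x. \<epsilon>^2 * f2 x), (\<lambda>x. \<epsilon> * f3 x), f4]
            in \<forall>i<4. \<forall>j<4. i \<noteq> j \<longrightarrow>
                 morse_on_sphere (\<lambda>x. (g ! i) x - (g ! j) x) \<and>
                 card (crit_set (\<lambda>x. (g ! i) x - (g ! j) x)) = 2)"
proof -
  note n = assms(1)
  have m1: "morse_on_sphere f1" "card (crit_set f1) = 2" using assms(2) by auto
  have m2: "morse_on_sphere f2" "card (crit_set f2) = 2" using assms(2) by auto
  have m3: "morse_on_sphere f3" "card (crit_set f3) = 2" using assms(2) by auto
  have m4: "morse_on_sphere f4" "card (crit_set f4) = 2" using assms(2) by auto
  have s1: "smooth_on_sphere f1" "smooth_on_sphere f2" "smooth_on_sphere f3"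
    using m1 m2 m3 unfolding morse_on_sphere_def by auto
  obtain d21 where d21: "d21 > 0" and S21: "\<forall>t s h. \<bar>t\<bar> < d21 \<longrightarrow> s \<noteq> 0 \<longrightarrow>
      (\<forall>x. h x = s * f2 x + (s * t) * f1 x) \<longrightarrow> morse_on_sphere h \<and> card (crit_set h) = 2"
    using stab_defs[OF n m2 s1(1)] by blast
  obtain d31 where d31: "d31 > 0" and S31: "\<forall>t s h. \<bar>t\<bar> < d31 \<longrightarrow> s \<noteq> 0 \<longrightarrow>
      (\<forall>x. h x = s * f3 x + (s * t) * f1 x) \<longrightarrow> morse_on_sphere h \<and> card (crit_set h) = 2"
    using stab_defs[OF n m3 s1(1)] by blast
  obtain d41 where d41: "d41 > 0" and S41: "\<forall>t s h. \<bar>t\<bar> < d41 \<longrightarrow> s \<noteq> 0 \<longrightarrow>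
      (\<forall>x. h x = s * f4 x + (s * t) * f1 x) \<longrightarrow> morse_on_sphere h \<and> card (crit_set h) = 2"
    using stab_defs[OF n m4 s1(1)] by blast
  obtain d32 where d32: "d32 > 0" and S32: "\<forall>t s h. \<bar>t\<bar> < d32 \<longrightarrow> s \<noteq> 0 \<longrightarrow>
      (\<forall>x. h x = s * f3 x + (s * t) * f2 x) \<longrightarrow> morse_on_sphere h \<and> card (crit_set h) = 2"
    using stab_defs[OF n m3 s1(2)] by blast
  obtain d42 where d42: "d42 > 0" and S42: "\<forall>t s h. \<bar>t\<bar> < d42 \<longrightarrow> s \<noteq> 0 \<longrightarrow>
      (\<forall>x. h x = s * f4 x + (s * t) * f2 x) \<longrightarrow> morse_on_sphere h \<and> card (crit_set h) = 2"
    using stab_defs[OF n m4 s1(2)] by blast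
  obtain d43 where d43: "d43 > 0" and S43: "\<forall>t s h. \<bar>t\<bar> < d43 \<longrightarrow> s \<noteq> 0 \<longrightarrow>
      (\<forall>x. h x = s * f4 x + (s * t) * f3 x) \<longrightarrow> morse_on_sphere h \<and> card (crit_set h) = 2"
    using stab_defs[OF n m4 s1(3)] by blast
  define e0 where "e0 = min 1 (min d21 (min d31 (min d41 (min d32 (min d42 d43)))))"
  have e0pos: "e0 > 0" unfolding e0_def using d21 d31 d41 d32 d42 d43 by simp
  show ?thesis
  proof (intro exI[of _ e0] conjI e0pos allI impI, elim conjE)
    fix e :: real assume e: "0 < e" "e < e0"
    have e1: "e < 1" and ed: "e < d21" "e < d31" "e < d41" "e < d32" "e < d42" "e < d43"
      using e unfolding e0_def by auto
    have e2: "e^2 \<le> e" using e e1 by (simp add: power2_eq_square mult_le_cancel_right1 less_imp_le)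
    have e3: "e^3 \<le> e" using e e1 e2 by (simp add: power3_eq_cube power2_eq_square)
      (metis mult_le_cancel_right1 order_le_less less_imp_le mult_le_one mult_nonneg_nonneg)
    have p2: "e^2 > 0" "e^3 > 0" using e by auto
    have q: "e^2 < d31" "e^2 < d42" "e^3 < d41" using e2 e3 ed by linarith+
    define g where "g = [(\<lambda>x. e^3 * f1 x), (\<lambda>x. e^2 * f2 x), (\<lambda>x. e * f3 x), f4]"
    have all: "morse_on_sphere (\<lambda>x. (g ! i) x - (g ! j) x) \<and>
        card (crit_set (\<lambda>x. (g ! i) x - (g ! j) x)) = 2"
      if ij: "i < 4" "j < 4" "i \<noteq> j" for i j
    proof -
      have i4: "i = 0 \<or> i = Suc 0 \<or> i = Suc (Suc 0) \<or> i = Suc (Suc (Suc 0))" using ij by arith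
      have j4: "j = 0 \<or> j = Suc 0 \<or> j = Suc (Suc 0) \<or> j = Suc (Suc (Suc 0))" using ij by arith
      from i4 j4 ij(3) show ?thesis
      proof (elim disjE)
        assume "i = 0" "j = Suc 0" then show ?thesis unfolding g_def
          by (simp, intro S21[rule_format, of "- e" "- (e^2)"]) (use ed e in \<open>auto simp: power3_eq_cube power2_eq_square\<close>)
      next
        assume "i = Suc 0" "j = 0" then show ?thesis unfolding g_def
          by (simp, intro S21[rule_format, of "- e" "e^2"]) (use ed e in \<open>auto simp: power3_eq_cube power2_eq_square\<close>)
      next
        assume "i = 0" "j = Suc (Suc 0)" then show ?thesis unfolding g_def
          by (simp, intro S31[rule_format, of "- (e^2)" "- e"]) (use ed e q in \<open>auto simp: power3_eq_cube power2_eq_square\<close>)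
      next
        assume "i = Suc (Suc 0)" "j = 0" then show ?thesis unfolding g_def
          by (simp, intro S31[rule_format, of "- (e^2)" "e"]) (use ed e q in \<open>auto simp: power3_eq_cube power2_eq_square\<close>)
      next
        assume "i = 0" "j = Suc (Suc (Suc 0))" then show ?thesis unfolding g_def
          by (simp, intro S41[rule_format, of "- (e^3)" "- 1"]) (use ed e q in \<open>auto simp: power3_eq_cube power2_eq_square\<close>)
      next
        assume "i = Suc (Suc (Suc 0))" "j = 0" then show ?thesis unfolding g_def
          by (simp, intro S41[rule_format, of "- (e^3)" "1"]) (use ed e q in \<open>auto simp: power3_eq_cube power2_eq_square\<close>)
      next
        assume "i = Suc 0" "j = Suc (Suc 0)" then show ?thesis unfolding g_def
          by (simp, intro S32[rule_format, of "- e" "- e"]) (use ed e in \<open>auto simp: power3_eq_cube power2_eq_square\<close>)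
      next
        assume "i = Suc (Suc 0)" "j = Suc 0" then show ?thesis unfolding g_def
          by (simp, intro S32[rule_format, of "- e" "e"]) (use ed e in \<open>auto simp: power3_eq_cube power2_eq_square\<close>)
      next
        assume "i = Suc 0" "j = Suc (Suc (Suc 0))" then show ?thesis unfolding g_def
          by (simp, intro S42[rule_format, of "- (e^2)" "- 1"]) (use ed e q in \<open>auto simp: power3_eq_cube power2_eq_square\<close>)
      next
        assume "i = Suc (Suc (Suc 0))" "j = Suc 0" then show ?thesis unfolding g_def
          by (simp, intro S42[rule_format, of "- (e^2)" "1"]) (use ed e q in \<open>auto simp: power3_eq_cube power2_eq_square\<close>)
      next
        assume "i = Suc (Suc 0)" "j = Suc (Suc (Suc 0))" then show ?thesis unfolding g_def
          by (simp, intro S43[rule_format, of "- e" "- 1"]) (use ed e in \<open>auto simp: power3_eq_cube power2_eq_square\<close>)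
      next
        assume "i = Suc (Suc (Suc 0))" "j = Suc (Suc 0)" then show ?thesis unfolding g_def
          by (simp, intro S43[rule_format, of "- e" "1"]) (use ed e in \<open>auto simp: power3_eq_cube power2_eq_square\<close>)
      qed auto
    qed
    show "let g = [(\<lambda>x. e^3 * f1 x), (\<lambda>x. e^2 * f2 x), (\<lambda>x. e * f3 x), f4]
            in \<forall>i<4. \<forall>j<4. i \<noteq> j \<longrightarrow>
                 morse_on_sphere (\<lambda>x. (g ! i) x - (g ! j) x) \<and>
                 card (crit_set (\<lambda>x. (g ! i) x - (g ! j) x)) = 2"
      unfolding Let_def g_def[symmetric] using all by blast
  qed
qed

end
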